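(* Let $\mathbb Z\langle X\rangle$ be the free unital associative ring on $X=\{x_1,x_2,\dots\}$ and let $T^{(4)}$ be its two-sided ideal generated by all $[a_1,a_2,a_3,a_4]$ ($a_i\in\mathbb Z\langle X\rangle$). Then $T^{(4)}$ is generated as a left ideal of $\mathbb Z\langle X\rangle$ by the polynomials \begin{gather*} [x_{i_1},x_{i_2},\dots,x_{i_k}]\quad(k\ge4,\ i_l\in\mathbb N),\qquad [x_{i_1},x_{i_2},x_{i_3}][x_{i_4},x_{i_5},x_{i_6}]\quad(i_l\in\mathbb N),\\ [x_{i_1},x_{i_2}][x_{i_3},x_{i_4},x_{i_5}]-\operatorname{sgn}(\sigma)[x_{i_{\sigma(1)}},x_{i_{\sigma(2)}}][x_{i_{\sigma(3)}},x_{i_{\sigma(4)}},x_{i_{\sigma(5)}}]\quad(i_l\in\mathbb N,\ \sigma\in S_5),\\ [x_{i_1},x_{i_2}][x_{i_3},x_{i_4}][x_{i_5},x_{i_6}]-\operatorname{sgn}(\sigma)[x_{i_{\sigma(1)}},x_{i_{\sigma(2)}}][x_{i_{\sigma(3)}},x_{i_{\sigma(4)}}][x_{i_{\sigma(5)}},x_{i_{\sigma(6)}}]\quad(i_l\in\mathbb N,\ \sigma\in S_6). \end{gather*}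
   Context: Commutators are left-normed: $[a,b]=ab-ba$, $[a_1,\dots,a_n]=[[a_1,\dots,a_{n-1}],a_n]$. *)

theory Defs
  imports "HOL-Library.Poly_Mapping" "HOL-Combinatorics.Permutations"
begin

text \<open>Words over the alphabet X = {x_0, x_1, ...} (indexed by nat); the free monoid,
  with concatenation written as +.\<close>
datatype word = Word "nat list"

instantiation word :: monoid_add
begin
fun plus_word :: "word \<Rightarrow> word \<Rightarrow> word" where
  "plus_word (Word u) (Word v) = Word (u @ v)"
definition zero_word :: word where "zero_word = Word []"
instance
proof
  fix a b c :: word
  show "a + b + c = a + (b + c)" by (cases a; cases b; cases c) simp
  show "0 + a = a" by (cases a) (simp add: zero_word_def)
  show "a + 0 = a" by (cases a) (simp add: zero_word_def)
qed
end

text \<open>The free unital associative ring Z<X>: the monoid ring Z[free monoid on X],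
  i.e. finitely supported functions words -> int with convolution product.\<close>
type_synonym fring = "word \<Rightarrow>\<^sub>0 int"

definition var :: "nat \<Rightarrow> fring" where
  "var i = Poly_Mapping.single (Word [i]) 1"

definition comm :: "'a::ring \<Rightarrow> 'a \<Rightarrow> 'a" where
  "comm a b = a * b - b * a"

fun lcomm :: "'a::ring list \<Rightarrow> 'a" where
  "lcomm [] = 0"
| "lcomm (a # as) = foldl comm a as"

inductive_set ideal_gen :: "'a::ring_1 set \<Rightarrow> 'a set" for S where
  base: "a \<in> S \<Longrightarrow> a \<in> ideal_gen S"
| zero: "0 \<in> ideal_gen S"
| add: "a \<in> ideal_gen S \<Longrightarrow> b \<in> ideal_gen S \<Longrightarrow> a + b \<in> ideal_gen S"
| lmult: "a \<in> ideal_gen S \<Longrightarrow> r * a \<in> ideal_gen S"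
| rmult: "a \<in> ideal_gen S \<Longrightarrow> a * r \<in> ideal_gen S"

inductive_set left_ideal_gen :: "'a::ring_1 set \<Rightarrow> 'a set" for S where
  base: "a \<in> S \<Longrightarrow> a \<in> left_ideal_gen S"
| zero: "0 \<in> left_ideal_gen S"
| add: "a \<in> left_ideal_gen S \<Longrightarrow> b \<in> left_ideal_gen S \<Longrightarrow> a + b \<in> left_ideal_gen S"
| lmult: "a \<in> left_ideal_gen S \<Longrightarrow> r * a \<in> left_ideal_gen S"

definition T4 :: "fring set" where
  "T4 = ideal_gen {lcomm [a1, a2, a3, a4] | a1 a2 a3 a4. True}"

definition gens :: "fring set" where
  "gens =
     {lcomm (map var is) | is. length is \<ge> 4}
   \<union> {lcomm [var (i 0), var (i 1), var (i 2)] * lcomm [var (i 3), var (i 4), var (i 5)]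
       | i :: nat \<Rightarrow> nat. True}
   \<union> {lcomm [var (i 0), var (i 1)] * lcomm [var (i 2), var (i 3), var (i 4)]
       - of_int (sign \<sigma>) *
         (lcomm [var (i (\<sigma> 0)), var (i (\<sigma> 1))] *
          lcomm [var (i (\<sigma> 2)), var (i (\<sigma> 3)), var (i (\<sigma> 4))])
       | (i :: nat \<Rightarrow> nat) \<sigma>. \<sigma> permutes {..<5::nat}}
   \<union> {lcomm [var (i 0), var (i 1)] * lcomm [var (i 2), var (i 3)] * lcomm [var (i 4), var (i 5)]
       - of_int (sign \<sigma>) *
         (lcomm [var (i (\<sigma> 0)), var (i (\<sigma> 1))] * lcomm [var (i (\<sigma> 2)), var (i (\<sigma> 3))] *
          lcomm [var (i (\<sigma> 4)), var (i (\<sigma> 5))])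
       | (i :: nat \<Rightarrow> nat) \<sigma>. \<sigma> permutes {..<6::nat}}"

end

theory Submission
  imports Defs
begin


abbreviation c3 :: "'a::ring \<Rightarrow> 'a \<Rightarrow> 'a \<Rightarrow> 'a" where "c3 a b c \<equiv> comm (comm a b) c"
abbreviation c4 :: "'a::ring \<Rightarrow> 'a \<Rightarrow> 'a \<Rightarrow> 'a \<Rightarrow> 'a" where "c4 a b c d \<equiv> comm (c3 a b c) d"

definition fF :: "'a::ring \<Rightarrow> 'a \<Rightarrow> 'a \<Rightarrow> 'a \<Rightarrow> 'a \<Rightarrow> 'a" where
  "fF a b c d e = comm a b * c3 c d e"
definition hT :: "'a::ring \<Rightarrow> 'a \<Rightarrow> 'a \<Rightarrow> 'a \<Rightarrow> 'a \<Rightarrow> 'a \<Rightarrow> 'a" where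
  "hT a b c d e g = c3 a b c * c3 d e g"
definition hD :: "'a::ring \<Rightarrow> 'a \<Rightarrow> 'a \<Rightarrow> 'a \<Rightarrow> 'a \<Rightarrow> 'a \<Rightarrow> 'a" where
  "hD a b c d e g = comm a b * comm c d * comm e g"

definition fT :: "(nat \<Rightarrow> 'a::ring) \<Rightarrow> 'a" where "fT y = fF (y 0) (y 1) (y 2) (y 3) (y 4)"
definition hDT :: "(nat \<Rightarrow> 'a::ring) \<Rightarrow> 'a" where "hDT y = hD (y 0) (y 1) (y 2) (y 3) (y 4) (y 5)"

lemma comm_anti: "comm b a = - comm (a::'a::ring) b"
  by (simp add: comm_def)

lemma lcomm2: "lcomm [a,b] = comm a b" by simp
lemma lcomm3: "lcomm [a,b,c] = c3 a b c" by simp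
lemma lcomm4: "lcomm [a,b,c,d] = c4 a b c d" by simp

definition subgrp :: "'b::ring_1 set \<Rightarrow> bool" where
  "subgrp S \<longleftrightarrow> 0 \<in> S \<and> (\<forall>a\<in>S. \<forall>b\<in>S. a + b \<in> S) \<and> (\<forall>a\<in>S. - a \<in> S)"

definition Rel :: "'b::ring_1 set \<Rightarrow> ((nat \<Rightarrow> 'x) \<Rightarrow> 'b) \<Rightarrow> int \<Rightarrow> (nat \<Rightarrow> nat) \<Rightarrow> bool" where
  "Rel S \<Phi> s \<rho> \<longleftrightarrow> (\<forall>y. \<Phi> (y \<circ> \<rho>) - of_int s * \<Phi> y \<in> S)"

lemma subgrp_sign:
  assumes "subgrp S" "a \<in> S" "s \<in> {1, -1}"
  shows "of_int s * a \<in> S"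
  using assms unfolding subgrp_def by auto

lemma subgrp_add: "subgrp S \<Longrightarrow> a \<in> S \<Longrightarrow> b \<in> S \<Longrightarrow> a + b \<in> S"
  unfolding subgrp_def by auto

lemma subgrp_zero: "subgrp {0}" unfolding subgrp_def by auto

lemma Rel_comp:
  assumes S: "subgrp S" and st: "s \<in> {1,-1}" "t \<in> {1,-1}"
    and r1: "Rel S \<Phi> s \<rho>" and r2: "Rel S \<Phi> t \<tau>"
  shows "Rel S \<Phi> (s * t) (\<rho> \<circ> \<tau>)"
  unfolding Rel_def
proof
  fix y
  have a: "\<Phi> ((y \<circ> \<rho>) \<circ> \<tau>) - of_int t * \<Phi> (y \<circ> \<rho>) \<in> S" using r2 unfolding Rel_def by blast
  have b: "\<Phi> (y \<circ> \<rho>) - of_int s * \<Phi> y \<in> S" using r1 unfolding Rel_def by blast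
  have c: "of_int t * (\<Phi> (y \<circ> \<rho>) - of_int s * \<Phi> y) \<in> S" by (rule subgrp_sign[OF S b st(2)])
  have e: "of_int (s * t) * \<Phi> y = of_int t * (of_int s * \<Phi> y)"
    by (simp only: mult.commute[of s t] of_int_mult mult.assoc)
  have "\<Phi> (y \<circ> (\<rho> \<circ> \<tau>)) - of_int (s * t) * \<Phi> y
     = (\<Phi> ((y \<circ> \<rho>) \<circ> \<tau>) - of_int t * \<Phi> (y \<circ> \<rho>)) + of_int t * (\<Phi> (y \<circ> \<rho>) - of_int s * \<Phi> y)"
    unfolding e by (simp add: comp_assoc right_diff_distrib)
  then show "\<Phi> (y \<circ> (\<rho> \<circ> \<tau>)) - of_int (s * t) * \<Phi> y \<in> S"
    using subgrp_add[OF S a c] by simp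
qed

lemma Rel_conj:
  assumes S: "subgrp S" and s: "s \<in> {1,-1}" and r: "Rel S \<Phi> s \<rho>" and t: "Rel S \<Phi> (-1) \<tau>"
    and eq: "\<rho> \<circ> \<tau> \<circ> \<rho> = \<tau>'"
  shows "Rel S \<Phi> (-1) \<tau>'"
proof -
  have r2: "Rel S \<Phi> (s * -1) (\<rho> \<circ> \<tau>)" by (rule Rel_comp[OF S s _ r t]) simp
  have "Rel S \<Phi> ((s * -1) * s) (\<rho> \<circ> \<tau> \<circ> \<rho>)" by (rule Rel_comp[OF S _ s r2 r]) (use s in auto)
  moreover have "(s * -1) * s = -1" using s by auto
  ultimately show ?thesis using eq by simp
qed

lemma sign_pm: "sign p \<in> {1, -1::int}"
  by (simp add: sign_def)

lemma perm_gen: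
  assumes S: "subgrp S"
    and tr: "\<And>i j. i < n \<Longrightarrow> j < n \<Longrightarrow> i \<noteq> j \<Longrightarrow> Rel S \<Phi> (-1) (transpose i j)"
    and \<sigma>: "\<sigma> permutes {..<n}"
  shows "Rel S \<Phi> (sign \<sigma>) \<sigma>"
  using \<sigma> finite_lessThan
proof (induction \<sigma> rule: permutes_induct)
  case id
  show ?case using S unfolding Rel_def subgrp_def by simp
next
  case (swap a b p)
  have "Rel S \<Phi> (-1 * sign p) (transpose a b \<circ> p)"
    by (rule Rel_comp[OF S _ sign_pm tr swap.IH]) (use swap in auto)
  moreover have "sign (transpose a b \<circ> p) = -1 * sign p"
  proof -
    have "permutation p" using swap(4) permutes_imp_permutation by blast
    then show ?thesis using swap(3) by (simp add: sign_compose permutation_swap_id sign_swap_id)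
  qed
  ultimately show ?case unfolding comp_def by simp
qed

lemma Rel_tsym: "Rel S \<Phi> s (transpose i j) \<Longrightarrow> Rel S \<Phi> s (transpose j i)"
  by (simp add: transpose_commute)

lemma less6: "(i::nat) < 6 \<Longrightarrow> i = 0 \<or> i = 1 \<or> i = 2 \<or> i = 3 \<or> i = 4 \<or> i = 5" by auto
lemma less5: "(i::nat) < 5 \<Longrightarrow> i = 0 \<or> i = 1 \<or> i = 2 \<or> i = 3 \<or> i = 4" by auto

lemma S6_gen:
  assumes S: "subgrp S"
    and t01: "Rel S \<Phi> (-1) (transpose 0 1)" and t23: "Rel S \<Phi> (-1) (transpose 2 3)"
    and t45: "Rel S \<Phi> (-1) (transpose 4 5)" and t13: "Rel S \<Phi> (-1) (transpose 1 3)"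
    and b2: "Rel S \<Phi> 1 (transpose 2 4 \<circ> transpose 3 5)"
    and \<sigma>: "\<sigma> permutes {..<6}"
  shows "Rel S \<Phi> (sign \<sigma>) \<sigma>"
proof (rule perm_gen[OF S _ \<sigma>])
  have m: "(-1::int) \<in> {1,-1}" "(1::int) \<in> {1,-1}" by auto
  have t03: "Rel S \<Phi> (-1) (transpose 0 3)"
    by (rule Rel_conj[OF S m(1) t01 t13]) (auto simp: fun_eq_iff transpose_def)
  have t12: "Rel S \<Phi> (-1) (transpose 1 2)"
    by (rule Rel_conj[OF S m(1) t23 t13]) (auto simp: fun_eq_iff transpose_def)
  have t02: "Rel S \<Phi> (-1) (transpose 0 2)"
    by (rule Rel_conj[OF S m(1) t01 t12]) (auto simp: fun_eq_iff transpose_def)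
  have t04: "Rel S \<Phi> (-1) (transpose 0 4)"
    by (rule Rel_conj[OF S m(2) b2 t02]) (auto simp: fun_eq_iff transpose_def)
  have t05: "Rel S \<Phi> (-1) (transpose 0 5)"
    by (rule Rel_conj[OF S m(2) b2 t03]) (auto simp: fun_eq_iff transpose_def)
  have t14: "Rel S \<Phi> (-1) (transpose 1 4)"
    by (rule Rel_conj[OF S m(2) b2 t12]) (auto simp: fun_eq_iff transpose_def)
  have t15: "Rel S \<Phi> (-1) (transpose 1 5)"
    by (rule Rel_conj[OF S m(2) b2 t13]) (auto simp: fun_eq_iff transpose_def)
  have t24: "Rel S \<Phi> (-1) (transpose 2 4)"
    by (rule Rel_conj[OF S m(1) t02 t04]) (auto simp: fun_eq_iff transpose_def)
  have t25: "Rel S \<Phi> (-1) (transpose 2 5)"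
    by (rule Rel_conj[OF S m(1) t02 t05]) (auto simp: fun_eq_iff transpose_def)
  have t34: "Rel S \<Phi> (-1) (transpose 3 4)"
    by (rule Rel_conj[OF S m(1) t03 t04]) (auto simp: fun_eq_iff transpose_def)
  have t35: "Rel S \<Phi> (-1) (transpose 3 5)"
    by (rule Rel_conj[OF S m(1) t03 t05]) (auto simp: fun_eq_iff transpose_def)
  note all = t01 t02 t03 t04 t05 t12 t13 t14 t15 t23 t24 t25 t34 t35 t45
  fix i j :: nat assume a: "i < 6" "j < 6" "i \<noteq> j"
  from less6[OF a(1)] less6[OF a(2)] a(3) show "Rel S \<Phi> (-1) (transpose i j)"
    by (elim disjE) (simp_all add: all[simplified] all[THEN Rel_tsym, simplified])
qed

lemma S5_gen:
  assumes S: "subgrp S"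
    and t01: "Rel S \<Phi> (-1) (transpose 0 1)" and t23: "Rel S \<Phi> (-1) (transpose 2 3)"
    and t04: "Rel S \<Phi> (-1) (transpose 0 4)" and t02: "Rel S \<Phi> (-1) (transpose 0 2)"
    and \<sigma>: "\<sigma> permutes {..<5}"
  shows "Rel S \<Phi> (sign \<sigma>) \<sigma>"
proof (rule perm_gen[OF S _ \<sigma>])
  have m: "(-1::int) \<in> {1,-1}" by auto
  have t14: "Rel S \<Phi> (-1) (transpose 1 4)"
    by (rule Rel_conj[OF S m t01 t04]) (auto simp: fun_eq_iff transpose_def)
  have t12: "Rel S \<Phi> (-1) (transpose 1 2)"
    by (rule Rel_conj[OF S m t01 t02]) (auto simp: fun_eq_iff transpose_def)
  have t24: "Rel S \<Phi> (-1) (transpose 2 4)"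
    by (rule Rel_conj[OF S m t02 t04]) (auto simp: fun_eq_iff transpose_def)
  have t03: "Rel S \<Phi> (-1) (transpose 0 3)"
    by (rule Rel_conj[OF S m t23 t02]) (auto simp: fun_eq_iff transpose_def)
  have t13: "Rel S \<Phi> (-1) (transpose 1 3)"
    by (rule Rel_conj[OF S m t01 t03]) (auto simp: fun_eq_iff transpose_def)
  have t34: "Rel S \<Phi> (-1) (transpose 3 4)"
    by (rule Rel_conj[OF S m t23 t24]) (auto simp: fun_eq_iff transpose_def)
  note all = t01 t02 t03 t04 t12 t13 t14 t23 t24 t34
  fix i j :: nat assume a: "i < 5" "j < 5" "i \<noteq> j"
  from less5[OF a(1)] less5[OF a(2)] a(3) show "Rel S \<Phi> (-1) (transpose i j)"
    by (elim disjE) (simp_all add: all[simplified] all[THEN Rel_tsym, simplified])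
qed


lemma comm_comm2: "comm P (comm c d) = comm (comm P c) d - comm (comm P d) (c::'a::ring)"
  by (simp add: comm_def algebra_simps)

lemma comm_mult_left: "comm (u * v) (b::'a::ring) = u * comm v b + comm u b * v"
  by (simp add: comm_def algebra_simps)
lemma comm_mult_right: "comm (b::'a::ring) (u * v) = u * comm b v + comm b u * v"
  by (simp add: comm_def algebra_simps)

lemma c3_mult1: "c3 (u*v) b (c::'a::ring) = u*c3 v b c + comm u c * comm v b + c3 u b c * v + comm u b * comm v c"
  by (simp add: comm_def algebra_simps)
lemma c3_mult3: "c3 a b ((u::'a::ring)*v) = u * c3 a b v + c3 a b u * v"
  by (simp add: comm_def algebra_simps)

lemma c4_mult1:
  fixes b c d u v :: "'a::ring"
  shows "c4 (u*v) b c d = u * c4 v b c d + c4 u b c d * v + comm u d * c3 v b c + comm u c * c3 v b d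
     + c3 u c d * comm v b + comm u b * c3 v c d + c3 u b c * comm v d + c3 u b d * comm v c"
  by (simp add: comm_def algebra_simps)

lemma c4_mult3:
  fixes a b d u v :: "'a::ring"
  shows "c4 a b (u*v) d = u * c4 a b v d + comm u d * c3 a b v + c4 a b u d * v + c3 a b u * comm v d"
  by (simp add: comm_def algebra_simps)

lemma swap_c3_c2: "c3 a b c * comm d e = comm d e * c3 a b c + comm (c4 a b c d) e - comm (c4 a b c e) (d::'a::ring)"
  by (simp add: comm_def algebra_simps)

lemma comm_c3_c3:
  "comm (c3 a b c) (c3 d e (g::'a::ring)) = comm (comm (c4 a b c d) e) g - comm (comm (c4 a b c e) d) g
     - comm (c4 a b c g) (comm d e)"
  by (simp add: comm_def algebra_simps)

lemma comm_0 [simp]: "comm 0 x = 0" "comm x 0 = 0" by (simp_all add: comm_def)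

section \<open>Part A: rings in which all 4-commutators vanish\<close>

locale partA =
  fixes U :: "'a::ring_1 set"
  assumes z0: "comm (comm (comm (a::'a) b) c) d = 0"
begin

lemma z0': "comm (c4 (a::'a) b c d) e = 0" by (simp add: z0)

lemma comm22: "comm (comm (a::'a) b) (comm c d) = 0"
  by (simp add: comm_comm2 z0)

lemma central3: "c3 (a::'a) b c * x = x * c3 a b c"
  using z0[of a b c x] unfolding comm_def by simp

lemma swap32: "c3 (a::'a) b c * comm d e = comm d e * c3 a b c"
  by (simp add: swap_c3_c2 z0 z0')

lemma A_h3: "hT (a::'a) b c d e g = 0"
proof -
  define P where "P = comm a b"
  define Q where "Q = comm d e"
  have id: "hT a b c d e g = comm (comm P (c*Q)) g - comm (c * comm P Q) g - comm (comm P c) g * Q"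
    unfolding hT_def P_def Q_def by (simp add: comm_def algebra_simps)
  have "comm P Q = 0" unfolding P_def Q_def by (rule comm22)
  then show ?thesis unfolding id P_def by (simp add: z0)
qed

lemma A_f01: "fF (b::'a) a c d e = - fF a b c d e"
  by (simp add: fF_def comm_def algebra_simps)
lemma A_f23: "fF (a::'a) b d c e = - fF a b c d e"
  by (simp add: fF_def comm_def algebra_simps)
lemma A_f04: "fF (c::'a) e a b d + fF d e a b c = 0"
proof -
  have id: "fF c e a b d + fF d e a b c = c4 a b (c*d) e - c*c4 a b d e - c4 a b c e * d
      - comm (c4 a b c d) e + comm (c4 a b c e) d"
    by (simp add: fF_def comm_def algebra_simps)
  show ?thesis unfolding id by (simp add: z0)
qed

lemma A_Rel01: "Rel {0} (fT::(nat\<Rightarrow>'a)\<Rightarrow>'a) (-1) (transpose 0 1)"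
  unfolding Rel_def fT_def apply (intro allI)
  subgoal for y using A_f01[of "y 1" "y 0" "y 2" "y 3" "y 4"] by (simp add: transpose_def)
  done
lemma A_Rel23: "Rel {0} (fT::(nat\<Rightarrow>'a)\<Rightarrow>'a) (-1) (transpose 2 3)"
  unfolding Rel_def fT_def apply (intro allI)
  subgoal for y using A_f23[of "y 0" "y 1" "y 3" "y 2" "y 4"] by (simp add: transpose_def)
  done
lemma A_Rel04: "Rel {0} (fT::(nat\<Rightarrow>'a)\<Rightarrow>'a) (-1) (transpose 0 4)"
  unfolding Rel_def fT_def apply (intro allI)
  subgoal for y using A_f04[of "y 0" "y 1" "y 2" "y 3" "y 4"] by (simp add: transpose_def add.commute)
  done
lemma A_Rel14: "Rel {0} (fT::(nat\<Rightarrow>'a)\<Rightarrow>'a) (-1) (transpose 1 4)"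
  by (rule Rel_conj[OF subgrp_zero _ A_Rel01 A_Rel04]) (auto simp: fun_eq_iff transpose_def)

lemma A_f02: "fF (a::'a) c b d e + fF b c a d e = 0"
proof -
  have e1: "fF a e b c d + fF a d b c e = 0" using A_Rel14 unfolding Rel_def fT_def
    by (drule_tac x="(!) [a,e,b,c,d]" in spec) (simp add: transpose_def add.commute)
  have e2: "fF b e a c d + fF b d a c e = 0" using A_Rel14 unfolding Rel_def fT_def
    by (drule_tac x="(!) [b,e,a,c,d]" in spec) (simp add: transpose_def add.commute)
  have id: "c4 (a*b) c d e = a * c4 b c d e + c4 a c d e * b + (fF a e b c d + fF a d b c e)
     + (fF b e a c d + fF b d a c e) + (fF a c b d e + fF b c a d e)
     + comm (c4 a d e b) c - comm (c4 a d e c) b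
     + comm (c4 a c d b) e - comm (c4 a c d e) b
     + comm (c4 a c e b) d - comm (c4 a c e d) b"
    by (simp add: fF_def comm_def algebra_simps)
  show ?thesis using id e1 e2 by (simp add: z0)
qed

lemma A_Rel02: "Rel {0} (fT::(nat\<Rightarrow>'a)\<Rightarrow>'a) (-1) (transpose 0 2)"
  unfolding Rel_def fT_def apply (intro allI)
  subgoal for y using A_f02[of "y 0" "y 1" "y 2" "y 3" "y 4"] by (simp add: transpose_def add.commute)
  done

lemma A_F: "\<sigma> permutes {..<5} \<Longrightarrow> fT ((y::nat\<Rightarrow>'a) \<circ> \<sigma>) = of_int (sign \<sigma>) * fT y"
  using S5_gen[OF subgrp_zero A_Rel01 A_Rel23 A_Rel04 A_Rel02] unfolding Rel_def by auto

end


context partA begin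

lemma A_fswap: "fF (e::'a) g x d b = - fF x g e d b"
  using A_f02[of e g x d b] by (simp add: eq_neg_iff_add_eq_0)

lemma A_h13: "hD (a::'a) b c d e g + hD a d c b e g = 0"
proof -
  have w1: "hD a b c d e g + hD a d c b e g
      = c3 (a*c) d b * comm e g - a * (c3 c d b * comm e g) - c3 a d b * c * comm e g"
    by (simp add: hD_def comm_def algebra_simps)
  have s1: "c3 (a*c) d b * comm e g = - fF (a*c) g e d b"
    using swap32[of "a*c" d b e g] A_fswap[of e g "a*c" d b] by (simp add: fF_def)
  have s2: "c3 c d b * comm e g = - fF c g e d b"
    using swap32[of c d b e g] A_fswap[of e g c d b] by (simp add: fF_def)
  have s3: "c3 a d b * c * comm e g = - (c * fF a g e d b)"
    using swap32[of a d b e g] A_fswap[of e g a d b] central3[of a d b c] by (simp add: fF_def mult.assoc)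
  have s4: "fF (a*c) g e d b = a * fF c g e d b + fF a g e d b * c"
    using central3[of e d b c] by (simp add: fF_def comm_mult_left algebra_simps)
  have s5: "fF a g e d b * c - c * fF a g e d b = hT a g c e d b + comm a g * comm (c3 e d b) c"
    by (simp add: fF_def hT_def comm_def algebra_simps)
  have "hD a b c d e g + hD a d c b e g = - (fF a g e d b * c - c * fF a g e d b)"
    unfolding w1 s1 s2 s3 s4 by (simp add: algebra_simps)
  also have "\<dots> = 0" unfolding s5 by (simp add: A_h3 z0)
  finally show ?thesis .
qed

lemma A_hRel01: "Rel {0} (hDT::(nat\<Rightarrow>'a)\<Rightarrow>'a) (-1) (transpose 0 1)"
  unfolding Rel_def hDT_def apply (intro allI)
  subgoal for y by (simp add: transpose_def hD_def comm_def algebra_simps)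
  done
lemma A_hRel23: "Rel {0} (hDT::(nat\<Rightarrow>'a)\<Rightarrow>'a) (-1) (transpose 2 3)"
  unfolding Rel_def hDT_def apply (intro allI)
  subgoal for y by (simp add: transpose_def hD_def comm_def algebra_simps)
  done
lemma A_hRel45: "Rel {0} (hDT::(nat\<Rightarrow>'a)\<Rightarrow>'a) (-1) (transpose 4 5)"
  unfolding Rel_def hDT_def apply (intro allI)
  subgoal for y by (simp add: transpose_def hD_def comm_def algebra_simps)
  done
lemma A_hRel13: "Rel {0} (hDT::(nat\<Rightarrow>'a)\<Rightarrow>'a) (-1) (transpose 1 3)"
  unfolding Rel_def hDT_def apply (intro allI)
  subgoal for y using A_h13[of "y 0" "y 1" "y 2" "y 3" "y 4" "y 5"]
    by (simp add: transpose_def add.commute)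
  done
lemma A_hRelb2: "Rel {0} (hDT::(nat\<Rightarrow>'a)\<Rightarrow>'a) 1 (transpose 2 4 \<circ> transpose 3 5)"
  unfolding Rel_def hDT_def apply (intro allI)
  subgoal for y
  proof -
    have "comm (y 4) (y 5) * comm (y 2) (y 3) = comm (y 2) (y 3) * comm (y 4) (y 5)"
      using comm22[of "y 4" "y 5" "y 2" "y 3"] by (simp add: comm_def algebra_simps)
    then show ?thesis by (simp add: transpose_def hD_def mult.assoc)
  qed
  done

lemma A_H: "\<sigma> permutes {..<6} \<Longrightarrow> hDT ((y::nat\<Rightarrow>'a) \<circ> \<sigma>) = of_int (sign \<sigma>) * hDT y"
  using S6_gen[OF subgrp_zero A_hRel01 A_hRel23 A_hRel45 A_hRel13 A_hRelb2] unfolding Rel_def by auto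

end


definition kap :: "'a::ring \<Rightarrow> 'a \<Rightarrow> 'a \<Rightarrow> 'a \<Rightarrow> 'a \<Rightarrow> 'a \<Rightarrow> 'a \<Rightarrow> 'a" where
  "kap u b c d e g v = comm u b * fF c d e g v"

lemma E_z3: "c4 a b ((u::'a::ring)*v) d = u*c4 a b v d + c4 a b u d * v + (fF u d a b v + fF v d a b u)
   + comm (c4 a b u v) d - comm (c4 a b u d) v"
  by (simp add: fF_def comm_def algebra_simps)

lemma E_z1: "c4 ((u::'a::ring)*v) b c d = u * c4 v b c d + c4 u b c d * v
   + (fF u d v b c + fF u c v b d) + (fF u b v c d + fF v b u c d) + (fF v d u b c + fF v c u b d)
   + (comm (c4 u c d v) b - comm (c4 u c d b) v + comm (c4 u b c v) d - comm (c4 u b c d) v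
      + comm (c4 u b d v) c - comm (c4 u b d c) v)"
  by (simp add: fF_def comm_def algebra_simps)

lemma E_z4: "c4 a b c ((u::'a::ring)*v) = u * c4 a b c v + c4 a b c u * v"
  by (simp add: comm_def algebra_simps)

lemma E_z2: "c4 a (b::'a::ring) c d = - c4 b a c d"
  by (simp add: comm_def algebra_simps)

lemma E_f0: "fF ((u::'a::ring)*v) q r s t = u * fF v q r s t + fF u q r s t * v - comm u q * c4 r s t v"
  by (simp add: fF_def comm_def algebra_simps)
lemma E_f1: "fF p (q::'a::ring) r s t = - fF q p r s t"
  by (simp add: fF_def comm_def algebra_simps)
lemma E_f4: "fF p q r s ((u::'a::ring)*v) = u * fF p q r s v + fF p q r s u * v + hT p q u r s v"
  by (simp add: fF_def hT_def comm_def algebra_simps)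
lemma E_f2: "fF p q ((u::'a::ring)*v) s t = u * fF p q v s t + fF p q u s t * v + hT p q u v s t
   + (hD p q u t v s + hD p q u s v t)"
  by (simp add: fF_def hT_def hD_def comm_def algebra_simps)
lemma E_f3: "fF p q r (s::'a::ring) t = - fF p q s r t"
  by (simp add: fF_def comm_def algebra_simps)

lemma E_h3_2: "hT a b ((u::'a::ring)*v) d e g = u * hT a b v d e g + hT a b u d e g * v - c3 a b u * c4 d e g v"
  by (simp add: hT_def comm_def algebra_simps)
lemma E_h3_5: "hT a b c d e ((u::'a::ring)*v) = u * hT a b c d e v + hT a b c d e u * v + c4 a b c u * c3 d e v"
  by (simp add: hT_def comm_def algebra_simps)
lemma E_h3_0: "hT ((u::'a::ring)*v) b c d e g = u * hT v b c d e g + hT u b c d e g * v - c3 u b c * c4 d e g v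
   + (comm v b * fF u c d e g + comm u b * fF v c d e g) + (c4 u c v b - c4 u c b v) * c3 d e g"
  by (simp add: hT_def fF_def comm_def algebra_simps)
lemma E_h3_1: "hT a (b::'a::ring) c d e g = - hT b a c d e g"
  by (simp add: hT_def comm_def algebra_simps)
lemma E_h3_blk: "hT a b c d e (g::'a::ring) = hT d e g a b c + (comm (comm (c4 a b c d) e) g - comm (comm (c4 a b c e) d) g
     - comm (c4 a b c g) (comm d e))"
  by (simp add: hT_def comm_def algebra_simps)

lemma E_h2_0: "hD ((u::'a::ring)*v) b c d e g = u * hD v b c d e g + hD u b c d e g * v
   - comm u b * (fF e g c d v + fF c d e g v) - comm u b * (comm (c4 c d v e) g - comm (c4 c d v g) e)"
  by (simp add: hD_def fF_def comm_def algebra_simps)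

lemma KSW:
  fixes u v b c d e g :: "'a::ring"
  assumes f1: "fF u c d e g = - fF d c u e g" and f2: "fF v b u e g = - fF u b v e g"
    and f3: "fF d c v e g = - fF v c d e g"
    and k1: "comm (comm v b) (comm d c) = 0" and k2: "comm (comm d c) (comm u b) = 0"
  shows "comm v b * fF u c d e g = - (comm u b * fF v c d e g)"
proof -
  have k1': "comm v b * comm d c = comm d c * comm v b" using k1 by (simp add: comm_def)
  have k2': "comm d c * comm u b = comm u b * comm d c" using k2 by (simp add: comm_def)
  have "comm v b * fF u c d e g = - (comm v b * comm d c * c3 u e g)"
    unfolding f1 by (simp add: fF_def mult.assoc)
  also have "\<dots> = - (comm d c * fF v b u e g)" by (simp add: k1' fF_def mult.assoc)
  also have "\<dots> = comm d c * comm u b * c3 v e g" unfolding f2 by (simp add: fF_def mult.assoc)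
  also have "\<dots> = comm u b * fF d c v e g" by (simp add: k2' fF_def mult.assoc)
  also have "\<dots> = - (comm u b * fF v c d e g)" unfolding f3 by simp
  finally show ?thesis .
qed

lemma sum5: "(\<Sum>k<5::nat. f k) = f 0 + f 1 + f 2 + f 3 + (f 4 :: 'a::comm_monoid_add)"
  by (simp add: numeral_eq_Suc lessThan_Suc add.commute add.left_commute)
lemma sum6: "(\<Sum>k<6::nat. f k) = f 0 + f 1 + f 2 + f 3 + f 4 + (f 5 :: 'a::comm_monoid_add)"
  by (simp add: numeral_eq_Suc lessThan_Suc add.commute add.left_commute)


lemma less4: "(i::nat) < 4 \<Longrightarrow> i = 0 \<or> i = 1 \<or> i = 2 \<or> i = 3" by auto

lemma sum4: "(\<Sum>k<4::nat. f k) = f 0 + f 1 + f 2 + (f 3 :: 'a::comm_monoid_add)"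
  by (simp add: numeral_eq_Suc lessThan_Suc add.commute add.left_commute)

lemma tr_test: "fT ((!) [a,b,c,d,e] \<circ> transpose 0 2) = fF c b a d (e::'a::ring)"
  by (simp add: fT_def transpose_def)
lemma tr_test2: "hDT ((!) [a,b,c,d,e,g] \<circ> (transpose 2 4 \<circ> transpose 3 5)) = hD a b e g c (d::'a::ring)"
  by (simp add: hDT_def transpose_def)

locale partB =
  fixes X :: "'a::ring_1 set"
  assumes bz: "\<lbrakk>a \<in> X; b \<in> X; c \<in> X; d \<in> X\<rbrakk> \<Longrightarrow> c4 a b c d = 0"
    and bh3: "\<lbrakk>a \<in> X; b \<in> X; c \<in> X; d \<in> X; e \<in> X; g \<in> X\<rbrakk> \<Longrightarrow> hT a b c d e g = 0"
    and bF: "(\<forall>k<5. y k \<in> X) \<Longrightarrow> \<sigma> permutes {..<5} \<Longrightarrow> fT (y \<circ> \<sigma>) = of_int (sign \<sigma>) * fT y"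
    and bH: "(\<forall>k<6. y k \<in> X) \<Longrightarrow> \<sigma> permutes {..<6} \<Longrightarrow> hDT (y \<circ> \<sigma>) = of_int (sign \<sigma>) * hDT y"
begin

inductive wd :: "nat \<Rightarrow> 'a \<Rightarrow> bool" where
  wd1: "x \<in> X \<Longrightarrow> wd 1 x"
| wdS: "x \<in> X \<Longrightarrow> wd n w \<Longrightarrow> wd (Suc n) (x * w)"

lemma wd_pos: "wd n w \<Longrightarrow> n \<ge> 1"
  by (induct rule: wd.induct) auto

lemma wd_one: "wd 1 w \<Longrightarrow> w \<in> X"
  by (cases rule: wd.cases) (auto dest: wd_pos)

lemma wd_long: "wd n w \<Longrightarrow> n \<ge> 2 \<Longrightarrow> \<exists>x m. x \<in> X \<and> wd (n - 1) m \<and> w = x * m"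
  by (cases rule: wd.cases) force+

definition Zd :: "nat \<Rightarrow> bool" where
  "Zd N \<longleftrightarrow> (\<forall>a b c d na nb nc nd. wd na a \<longrightarrow> wd nb b \<longrightarrow> wd nc c \<longrightarrow> wd nd d \<longrightarrow>
     na + nb + nc + nd = N \<longrightarrow> c4 a b c d = 0)"
definition H3d :: "nat \<Rightarrow> bool" where
  "H3d N \<longleftrightarrow> (\<forall>a b c d e g na nb nc nd ne ng. wd na a \<longrightarrow> wd nb b \<longrightarrow> wd nc c \<longrightarrow> wd nd d \<longrightarrow>
     wd ne e \<longrightarrow> wd ng g \<longrightarrow> na + nb + nc + nd + ne + ng = N \<longrightarrow> hT a b c d e g = 0)"
definition Fd :: "nat \<Rightarrow> bool" where
  "Fd N \<longleftrightarrow> (\<forall>y dy \<sigma>. (\<forall>k<5. wd (dy k) (y k)) \<longrightarrow> (\<Sum>k<5. dy k) = N \<longrightarrow> \<sigma> permutes {..<5} \<longrightarrow>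
     fT (y \<circ> \<sigma>) = of_int (sign \<sigma>) * fT y)"
definition Hd :: "nat \<Rightarrow> bool" where
  "Hd N \<longleftrightarrow> (\<forall>y dy \<sigma>. (\<forall>k<6. wd (dy k) (y k)) \<longrightarrow> (\<Sum>k<6. dy k) = N \<longrightarrow> \<sigma> permutes {..<6} \<longrightarrow>
     hDT (y \<circ> \<sigma>) = of_int (sign \<sigma>) * hDT y)"
definition AllD :: "nat \<Rightarrow> bool" where
  "AllD N \<longleftrightarrow> Zd N \<and> H3d N \<and> Fd N \<and> Hd N"

lemma ZL:
  assumes "\<forall>M<N. AllD M" "wd na a" "wd nb b" "wd nc c" "wd nd d" "na + nb + nc + nd < N"
  shows "c4 a b c d = 0"
  using assms unfolding AllD_def Zd_def by blast

lemma H3L: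
  assumes "\<forall>M<N. AllD M" "wd na a" "wd nb b" "wd nc c" "wd nd d" "wd ne e" "wd ng g"
    "na + nb + nc + nd + ne + ng < N"
  shows "hT a b c d e g = 0"
  using assms unfolding AllD_def H3d_def by blast

lemma F_inst:
  assumes F: "Fd M" and "wd na a" "wd nb b" "wd nc c" "wd nd d" "wd ne e" "na + nb + nc + nd + ne = M"
    and \<sigma>: "\<sigma> permutes {..<5}"
  shows "fT ((!) [a,b,c,d,e] \<circ> \<sigma>) = of_int (sign \<sigma>) * fF a b c d e"
proof -
  have w: "\<forall>k<5. wd ([na,nb,nc,nd,ne] ! k) ([a,b,c,d,e] ! k)"
    using assms(2-6) by (auto dest!: less5)
  have s: "(\<Sum>k<5. [na,nb,nc,nd,ne] ! k) = M" using assms(7) by (simp add: sum5)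
  have e: "fT ((!) [a,b,c,d,e]) = fF a b c d e" by (simp add: fT_def)
  show ?thesis using F[unfolded Fd_def, rule_format, OF w[rule_format] s \<sigma>] unfolding e .
qed

lemma H_inst:
  assumes H: "Hd M" and "wd na a" "wd nb b" "wd nc c" "wd nd d" "wd ne e" "wd ng g"
    "na + nb + nc + nd + ne + ng = M"
    and \<sigma>: "\<sigma> permutes {..<6}"
  shows "hDT ((!) [a,b,c,d,e,g] \<circ> \<sigma>) = of_int (sign \<sigma>) * hD a b c d e g"
proof -
  have w: "\<forall>k<6. wd ([na,nb,nc,nd,ne,ng] ! k) ([a,b,c,d,e,g] ! k)"
    using assms(2-7) by (auto dest!: less6)
  have s: "(\<Sum>k<6. [na,nb,nc,nd,ne,ng] ! k) = M" using assms(8) by (simp add: sum6)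
  have e: "hDT ((!) [a,b,c,d,e,g]) = hD a b c d e g" by (simp add: hDT_def)
  show ?thesis using H[unfolded Hd_def, rule_format, OF w[rule_format] s \<sigma>] unfolding e .
qed

lemma F_tr:
  assumes F: "Fd M" and "wd na a" "wd nb b" "wd nc c" "wd nd d" "wd ne e" "na + nb + nc + nd + ne = M"
    and "i < 5" "j < 5" "i \<noteq> j"
  shows "fT ((!) [a,b,c,d,e] \<circ> transpose i j) = - fF a b c d e"
  using F_inst[OF assms(1-7), of "transpose i j"] assms(8-10)
  by (simp add: permutes_swap_id sign_swap_id)

lemma H_tr:
  assumes H: "Hd M" and "wd na a" "wd nb b" "wd nc c" "wd nd d" "wd ne e" "wd ng g"
    "na + nb + nc + nd + ne + ng = M"
    and "i < 6" "j < 6" "i \<noteq> j"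
  shows "hDT ((!) [a,b,c,d,e,g] \<circ> transpose i j) = - hD a b c d e g"
  using H_inst[OF assms(1-8), of "transpose i j"] assms(9-11)
  by (simp add: permutes_swap_id sign_swap_id)

lemma FL:
  assumes "\<forall>M<N. AllD M" "wd na a" "wd nb b" "wd nc c" "wd nd d" "wd ne e" "na + nb + nc + nd + ne < N"
  shows "Fd (na + nb + nc + nd + ne)"
  using assms unfolding AllD_def by blast

lemma HL:
  assumes "\<forall>M<N. AllD M" "na + nb + nc + nd + ne + ng < N"
  shows "Hd (na + nb + nc + nd + ne + ng)"
  using assms unfolding AllD_def by blast

end


context partB begin

lemma FLtr:
  assumes "\<forall>M<N. AllD M" "wd na a" "wd nb b" "wd nc c" "wd nd d" "wd ne e" "na + nb + nc + nd + ne < N"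
    "i < 5" "j < 5" "i \<noteq> j"
  shows "fT ((!) [a,b,c,d,e] \<circ> transpose i j) = - fF a b c d e"
  by (rule F_tr[OF FL[OF assms(1-7)] assms(2-6) refl assms(8-10)])

lemma HLtr:
  assumes "\<forall>M<N. AllD M" "wd na a" "wd nb b" "wd nc c" "wd nd d" "wd ne e" "wd ng g"
    "na + nb + nc + nd + ne + ng < N" "i < 6" "j < 6" "i \<noteq> j"
  shows "hDT ((!) [a,b,c,d,e,g] \<circ> transpose i j) = - hD a b c d e g"
  by (rule H_tr[OF HL[OF assms(1,8)] assms(2-7) refl assms(9-11)])

lemma FLinst:
  assumes "\<forall>M<N. AllD M" "wd na a" "wd nb b" "wd nc c" "wd nd d" "wd ne e" "na + nb + nc + nd + ne < N"
    "\<sigma> permutes {..<5}"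
  shows "fT ((!) [a,b,c,d,e] \<circ> \<sigma>) = of_int (sign \<sigma>) * fF a b c d e"
  by (rule F_inst[OF FL[OF assms(1-7)] assms(2-6) refl assms(8)])

lemma H3_pos2:
  assumes IH: "\<forall>M<N. AllD M" and x: "x \<in> X" and m: "wd n m"
    and w: "wd na a" "wd nb b" "wd nd d" "wd ne e" "wd ng g"
    and s: "na + nb + Suc n + nd + ne + ng = N"
  shows "hT a b (x*m) d e g = 0"
proof -
  note pos = wd_pos[OF m] wd_pos[OF w(1)] wd_pos[OF w(2)] wd_pos[OF w(3)] wd_pos[OF w(4)] wd_pos[OF w(5)]
  have x1: "wd 1 x" by (rule wd1[OF x])
  have "hT a b m d e g = 0" by (rule H3L[OF IH w(1,2) m w(3-5)]) (use s in simp)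
  moreover have "hT a b x d e g = 0" by (rule H3L[OF IH w(1,2) x1 w(3-5)]) (use s pos in simp)
  moreover have "c4 d e g m = 0" by (rule ZL[OF IH w(3-5) m]) (use s pos in simp)
  ultimately show ?thesis by (simp add: E_h3_2)
qed

lemma H3_pos5:
  assumes IH: "\<forall>M<N. AllD M" and x: "x \<in> X" and m: "wd n m"
    and w: "wd na a" "wd nb b" "wd nc c" "wd nd d" "wd ne e"
    and s: "na + nb + nc + nd + ne + Suc n = N"
  shows "hT a b c d e (x*m) = 0"
proof -
  note pos = wd_pos[OF m] wd_pos[OF w(1)] wd_pos[OF w(2)] wd_pos[OF w(3)] wd_pos[OF w(4)] wd_pos[OF w(5)]
  have x1: "wd 1 x" by (rule wd1[OF x])
  have "hT a b c d e m = 0" by (rule H3L[OF IH w m]) (use s in simp)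
  moreover have "hT a b c d e x = 0" by (rule H3L[OF IH w x1]) (use s pos in simp)
  moreover have "c4 a b c x = 0" by (rule ZL[OF IH w(1-3) x1]) (use s pos in simp)
  ultimately show ?thesis by (simp add: E_h3_5)
qed

lemma H3_pos0:
  assumes IH: "\<forall>M<N. AllD M" and x: "x \<in> X" and m: "wd n m"
    and w: "wd nb b" "wd nc c" "wd nd d" "wd ne e" "wd ng g"
    and s: "Suc n + nb + nc + nd + ne + ng = N"
  shows "hT (x*m) b c d e g = 0"
proof -
  note pos = wd_pos[OF m] wd_pos[OF w(1)] wd_pos[OF w(2)] wd_pos[OF w(3)] wd_pos[OF w(4)] wd_pos[OF w(5)]
  have x1: "wd 1 x" by (rule wd1[OF x])
  have h1: "hT m b c d e g = 0" by (rule H3L[OF IH m w]) (use s in simp)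
  have h2: "hT x b c d e g = 0" by (rule H3L[OF IH x1 w]) (use s pos in simp)
  have z1: "c4 d e g m = 0" by (rule ZL[OF IH w(3-5) m]) (use s pos in simp)
  have z2: "c4 x c m b = 0" by (rule ZL[OF IH x1 w(2) m w(1)]) (use s pos in simp)
  have z3: "c4 x c b m = 0" by (rule ZL[OF IH x1 w(2) w(1) m]) (use s pos in simp)
  have f1: "fF d c x e g = - fF x c d e g"
    using FLtr[OF IH x1 w(2-5), of 0 2] s pos by (simp add: fT_def transpose_def)
  have f2: "fF x b m e g = - fF m b x e g"
    using FLtr[OF IH m w(1) x1 w(4,5), of 0 2] s pos by (simp add: fT_def transpose_def)
  have f3: "fF m c d e g = - fF d c m e g"
    using FLtr[OF IH w(3) w(2) m w(4,5), of 0 2] s pos by (simp add: fT_def transpose_def)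
  have k1: "comm (comm m b) (comm d c) = 0"
    using ZL[OF IH m w(1) w(3) w(2)] ZL[OF IH m w(1) w(2) w(3)] s pos by (simp add: comm_comm2)
  have k2: "comm (comm d c) (comm x b) = 0"
    using ZL[OF IH w(3) w(2) x1 w(1)] ZL[OF IH w(3) w(2) w(1) x1] s pos by (simp add: comm_comm2)
  have r: "comm m b * fF x c d e g = - (comm x b * fF m c d e g)"
    by (rule KSW) (use f1 f2 f3 k1 k2 in simp_all)
  show ?thesis unfolding E_h3_0 using h1 h2 z1 z2 z3 r by simp
qed

lemma H3_pos01:
  assumes IH: "\<forall>M<N. AllD M"
    and w: "wd na a" "wd nb b" "wd nc c" "wd nd d" "wd ne e" "wd ng g"
    and s: "na + nb + nc + nd + ne + ng = N" and l: "na \<ge> 2 \<or> nb \<ge> 2 \<or> nc \<ge> 2 \<or> ng \<ge> 2"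
  shows "hT a b c d e g = 0"
  using l
proof (elim disjE)
  assume "na \<ge> 2"
  then obtain x m where "x \<in> X" "wd (na - 1) m" "a = x * m" using wd_long[OF w(1)] by blast
  then show ?thesis using H3_pos0[OF IH, of x "na - 1" m] w s \<open>na \<ge> 2\<close> by simp
next
  assume "nb \<ge> 2"
  then obtain x m where "x \<in> X" "wd (nb - 1) m" "b = x * m" using wd_long[OF w(2)] by blast
  then have "hT b a c d e g = 0" using H3_pos0[OF IH, of x "nb - 1" m] w s \<open>nb \<ge> 2\<close> by simp
  then show ?thesis by (simp add: E_h3_1[of a b])
next
  assume "nc \<ge> 2"
  then obtain x m where "x \<in> X" "wd (nc - 1) m" "c = x * m" using wd_long[OF w(3)] by blast
  then show ?thesis using H3_pos2[OF IH, of x "nc - 1" m] w s \<open>nc \<ge> 2\<close> by simp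
next
  assume "ng \<ge> 2"
  then obtain x m where "x \<in> X" "wd (ng - 1) m" "g = x * m" using wd_long[OF w(6)] by blast
  then show ?thesis using H3_pos5[OF IH, of x "ng - 1" m] w s \<open>ng \<ge> 2\<close> by simp
qed

lemma H3_step:
  assumes IH: "\<forall>M<N. AllD M"
  shows "H3d N"
  unfolding H3d_def
proof (intro allI impI)
  fix a b c d e g na nb nc nd ne ng
  assume w: "wd na a" "wd nb b" "wd nc c" "wd nd d" "wd ne e" "wd ng g"
    and s: "na + nb + nc + nd + ne + ng = N"
  note pos = wd_pos[OF w(1)] wd_pos[OF w(2)] wd_pos[OF w(3)] wd_pos[OF w(4)] wd_pos[OF w(5)] wd_pos[OF w(6)]
  show "hT a b c d e g = 0"
  proof (cases "na \<ge> 2 \<or> nb \<ge> 2 \<or> nc \<ge> 2 \<or> ng \<ge> 2")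
    case True
    then show ?thesis by (rule H3_pos01[OF IH w s])
  next
    case F: False
    show ?thesis
    proof (cases "nd \<ge> 2 \<or> ne \<ge> 2")
      case True
      have "hT d e g a b c = 0"
        by (rule H3_pos01[OF IH w(4-6) w(1-3)]) (use s True in auto)
      moreover have "c4 a b c d = 0" "c4 a b c e = 0" "c4 a b c g = 0"
        using ZL[OF IH w(1-3) w(4)] ZL[OF IH w(1-3) w(5)] ZL[OF IH w(1-3) w(6)] s pos by auto
      ultimately show ?thesis by (simp add: E_h3_blk[of a b c d e g])
    next
      case False
      with F pos have "na = 1" "nb = 1" "nc = 1" "nd = 1" "ne = 1" "ng = 1" by auto
      then show ?thesis using w by (intro bh3) (auto intro: wd_one)
    qed
  qed
qed

end


lemma K1:
  fixes u b c d e g v :: "'a::ring"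
  assumes f1: "fF d c e g v = - fF e c d g v" and f2: "fF b u d g v = - fF d u b g v"
    and f3: "fF e c b g v = - fF b c e g v"
    and k1: "comm (comm b u) (comm e c) = 0" and k2: "comm (comm e c) (comm d u) = 0"
  shows "kap u b c d e g v + kap u d c b e g v = 0"
proof -
  have r: "comm b u * fF d c e g v = - (comm d u * fF b c e g v)"
    by (rule KSW[OF f1 f2 f3 k1 k2])
  have "kap u b c d e g v = comm b u * fF d c e g v" by (simp add: kap_def fF_def comm_def algebra_simps)
  moreover have "kap u d c b e g v = comm d u * fF b c e g v" by (simp add: kap_def fF_def comm_def algebra_simps)
  ultimately show ?thesis using r by simp
qed

lemma K2:
  fixes u a c d e g v :: "'a::ring"
  assumes f1: "fF c d e g v = - fF e d c g v" and f2: "fF a u c g v = - fF c u a g v"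
    and f3: "fF e d a g v = - fF a d e g v"
    and k1: "comm (comm a u) (comm e d) = 0" and k2: "comm (comm e d) (comm c u) = 0"
  shows "kap u a c d e g v + kap u c a d e g v = 0"
proof -
  have r: "comm a u * fF c d e g v = - (comm c u * fF a d e g v)"
    by (rule KSW[OF f1 f2 f3 k1 k2])
  have "kap u a c d e g v = - (comm a u * fF c d e g v)" by (simp add: kap_def fF_def comm_def algebra_simps)
  moreover have "kap u c a d e g v = - (comm c u * fF a d e g v)" by (simp add: kap_def fF_def comm_def algebra_simps)
  ultimately show ?thesis using r by simp
qed

lemma sign_tt: "a \<noteq> b \<Longrightarrow> c \<noteq> d \<Longrightarrow> sign (transpose a b \<circ> transpose c d) = 1"
  by (simp add: sign_compose permutation_swap_id sign_swap_id)

lemma permutes_tt: "a \<in> S \<Longrightarrow> b \<in> S \<Longrightarrow> c \<in> S \<Longrightarrow> d \<in> S \<Longrightarrow> transpose a b \<circ> transpose c d permutes S"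
  by (intro permutes_compose permutes_swap_id)

context partB begin

lemma H2_exp0:
  assumes IH: "\<forall>M<N. AllD M" and x: "x \<in> X" and m: "wd n m"
    and w: "wd nb b" "wd nc c" "wd nd d" "wd ne e" "wd ng g"
    and s: "Suc n + nb + nc + nd + ne + ng = N"
  shows "hD (x*m) b c d e g = x * hD m b c d e g + hD x b c d e g * m - (kap x b c d e g m + kap x b c d e g m)"
proof -
  note pos = wd_pos[OF m] wd_pos[OF w(1)] wd_pos[OF w(2)] wd_pos[OF w(3)] wd_pos[OF w(4)] wd_pos[OF w(5)]
  have f: "fF e g c d m = fF c d e g m"
    using FLinst[OF IH w(2-5) m _ permutes_tt[of 0 "{..<5}" 2 1 3]] s pos
    by (simp add: fT_def transpose_def sign_tt)
  have z: "c4 c d m e = 0" "c4 c d m g = 0"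
    using ZL[OF IH w(2,3) m w(4)] ZL[OF IH w(2,3) m w(5)] s pos by auto
  show ?thesis unfolding E_h2_0 f z by (simp add: kap_def algebra_simps)
qed

lemma K1L:
  assumes IH: "\<forall>M<N. AllD M" and x: "x \<in> X" and m: "wd n m"
    and w: "wd nb b" "wd nc c" "wd nd d" "wd ne e" "wd ng g"
    and s: "Suc n + nb + nc + nd + ne + ng = N"
  shows "kap x b c d e g m + kap x d c b e g m = 0"
proof -
  note pos = wd_pos[OF m] wd_pos[OF w(1)] wd_pos[OF w(2)] wd_pos[OF w(3)] wd_pos[OF w(4)] wd_pos[OF w(5)]
  have x1: "wd 1 x" by (rule wd1[OF x])
  show ?thesis
  proof (rule K1)
    show "fF d c e g m = - fF e c d g m"
      using FLtr[OF IH w(3,2,4,5) m, of 0 2] s pos by (simp add: fT_def transpose_def)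
    show "fF b x d g m = - fF d x b g m"
      using FLtr[OF IH w(1) x1 w(3,5) m, of 0 2] s pos by (simp add: fT_def transpose_def)
    show "fF e c b g m = - fF b c e g m"
      using FLtr[OF IH w(4,2,1,5) m, of 0 2] s pos by (simp add: fT_def transpose_def)
    show "comm (comm b x) (comm e c) = 0"
      using ZL[OF IH w(1) x1 w(4,2)] ZL[OF IH w(1) x1 w(2,4)] s pos by (simp add: comm_comm2)
    show "comm (comm e c) (comm d x) = 0"
      using ZL[OF IH w(4,2,3) x1] ZL[OF IH w(4,2) x1 w(3)] s pos by (simp add: comm_comm2)
  qed
qed

lemma K2L:
  assumes IH: "\<forall>M<N. AllD M" and x: "x \<in> X" and m: "wd n m"
    and w: "wd na a" "wd nc c" "wd nd d" "wd ne e" "wd ng g"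
    and s: "Suc n + na + nc + nd + ne + ng = N"
  shows "kap x a c d e g m + kap x c a d e g m = 0"
proof -
  note pos = wd_pos[OF m] wd_pos[OF w(1)] wd_pos[OF w(2)] wd_pos[OF w(3)] wd_pos[OF w(4)] wd_pos[OF w(5)]
  have x1: "wd 1 x" by (rule wd1[OF x])
  show ?thesis
  proof (rule K2)
    show "fF c d e g m = - fF e d c g m"
      using FLtr[OF IH w(2,3,4,5) m, of 0 2] s pos by (simp add: fT_def transpose_def)
    show "fF a x c g m = - fF c x a g m"
      using FLtr[OF IH w(1) x1 w(2,5) m, of 0 2] s pos by (simp add: fT_def transpose_def)
    show "fF e d a g m = - fF a d e g m"
      using FLtr[OF IH w(4,3,1,5) m, of 0 2] s pos by (simp add: fT_def transpose_def)
    show "comm (comm a x) (comm e d) = 0"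
      using ZL[OF IH w(1) x1 w(4,3)] ZL[OF IH w(1) x1 w(3,4)] s pos by (simp add: comm_comm2)
    show "comm (comm e d) (comm c x) = 0"
      using ZL[OF IH w(4,3,2) x1] ZL[OF IH w(4,3) x1 w(2)] s pos by (simp add: comm_comm2)
  qed
qed

end


lemma id_blk1: "hD a (b::'a::ring) c d e g = - hD b a c d e g"
  by (simp add: hD_def comm_def algebra_simps)
lemma id_blk2: "hD a d c (b::'a::ring) e g = - hD b c a d e g + comm (comm a d) (comm c b) * comm e g"
  by (simp add: hD_def comm_def algebra_simps)
lemma id_blk3: "hD a b C d e (g::'a::ring) = hD C d a b e g + comm (comm a b) (comm C d) * comm e g"
  by (simp add: hD_def comm_def algebra_simps)
lemma id_blk4: "hD a b c d E (g::'a::ring) = hD E g a b c d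
   + (comm a b * comm (comm c d) (comm E g) + comm (comm a b) (comm E g) * comm c d)"
  by (simp add: hD_def comm_def algebra_simps)
lemma id_blk5: "hD a b c d e (g::'a::ring) = - hD a b c d g e"
  by (simp add: hD_def comm_def algebra_simps)

context partB begin

lemma H2c0:
  assumes IH: "\<forall>M<N. AllD M" and x: "x \<in> X" and m: "wd n m"
    and w: "wd nb b" "wd nc c" "wd nd d" "wd ne e" "wd ng g"
    and s: "Suc n + nb + nc + nd + ne + ng = N"
  shows "hD (x*m) b c d e g + hD (x*m) d c b e g = 0"
proof -
  note pos = wd_pos[OF m] wd_pos[OF w(1)] wd_pos[OF w(2)] wd_pos[OF w(3)] wd_pos[OF w(4)] wd_pos[OF w(5)]
  have x1: "wd 1 x" by (rule wd1[OF x])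
  have e1: "hD (x*m) b c d e g = x * hD m b c d e g + hD x b c d e g * m - (kap x b c d e g m + kap x b c d e g m)"
    by (rule H2_exp0[OF IH x m w s])
  have e2: "hD (x*m) d c b e g = x * hD m d c b e g + hD x d c b e g * m - (kap x d c b e g m + kap x d c b e g m)"
    by (rule H2_exp0[OF IH x m w(3,2,1,4,5)]) (use s in simp)
  have A: "hD m d c b e g = - hD m b c d e g"
    using HLtr[OF IH m w, of 1 3] s pos by (simp add: hDT_def transpose_def)
  have B: "hD x d c b e g = - hD x b c d e g"
    using HLtr[OF IH x1 w, of 1 3] s pos by (simp add: hDT_def transpose_def)
  have K: "kap x d c b e g m = - kap x b c d e g m"
    using K1L[OF IH x m w s] by (simp add: eq_neg_iff_add_eq_0 add.commute)
  show ?thesis unfolding e1 e2 A B K by (simp add: algebra_simps)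
qed

lemma H2c1:
  assumes IH: "\<forall>M<N. AllD M" and x: "x \<in> X" and m: "wd n m"
    and w: "wd na a" "wd nc c" "wd nd d" "wd ne e" "wd ng g"
    and s: "na + Suc n + nc + nd + ne + ng = N"
  shows "hD a (x*m) c d e g + hD a d c (x*m) e g = 0"
proof -
  note pos = wd_pos[OF m] wd_pos[OF w(1)] wd_pos[OF w(2)] wd_pos[OF w(3)] wd_pos[OF w(4)] wd_pos[OF w(5)]
  have x1: "wd 1 x" by (rule wd1[OF x])
  have xm: "wd (Suc n) (x*m)" by (rule wdS[OF x m])
  have z: "comm (comm a d) (comm c (x*m)) = 0"
    using ZL[OF IH w(1,3,2) xm] ZL[OF IH w(1,3) xm w(2)] s pos by (simp add: comm_comm2)
  have e1: "hD (x*m) a c d e g = x * hD m a c d e g + hD x a c d e g * m - (kap x a c d e g m + kap x a c d e g m)"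
    by (rule H2_exp0[OF IH x m w]) (use s in simp)
  have e2: "hD (x*m) c a d e g = x * hD m c a d e g + hD x c a d e g * m - (kap x c a d e g m + kap x c a d e g m)"
    by (rule H2_exp0[OF IH x m w(2,1,3,4,5)]) (use s in simp)
  have A: "hD m c a d e g = - hD m a c d e g"
    using HLtr[OF IH m w, of 1 2] s pos by (simp add: hDT_def transpose_def)
  have B: "hD x c a d e g = - hD x a c d e g"
    using HLtr[OF IH x1 w, of 1 2] s pos by (simp add: hDT_def transpose_def)
  have K: "kap x c a d e g m = - kap x a c d e g m"
    using K2L[OF IH x m w] s by (simp add: eq_neg_iff_add_eq_0 add.commute)
  show ?thesis unfolding id_blk1[of a "x*m"] id_blk2[of a d c "x*m"] z e1 e2 A B K
    by (simp add: algebra_simps)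
qed

lemma H2c2:
  assumes IH: "\<forall>M<N. AllD M" and x: "x \<in> X" and m: "wd n m"
    and w: "wd na a" "wd nb b" "wd nd d" "wd ne e" "wd ng g"
    and s: "na + nb + Suc n + nd + ne + ng = N"
  shows "hD a b (x*m) d e g + hD a d (x*m) b e g = 0"
proof -
  note pos = wd_pos[OF m] wd_pos[OF w(1)] wd_pos[OF w(2)] wd_pos[OF w(3)] wd_pos[OF w(4)] wd_pos[OF w(5)]
  have x1: "wd 1 x" by (rule wd1[OF x])
  have xm: "wd (Suc n) (x*m)" by (rule wdS[OF x m])
  have z1: "comm (comm a b) (comm (x*m) d) = 0"
    using ZL[OF IH w(1,2) xm w(3)] ZL[OF IH w(1,2,3) xm] s pos by (simp add: comm_comm2)
  have z2: "comm (comm a d) (comm (x*m) b) = 0"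
    using ZL[OF IH w(1,3) xm w(2)] ZL[OF IH w(1,3,2) xm] s pos by (simp add: comm_comm2)
  have e1: "hD (x*m) d a b e g = x * hD m d a b e g + hD x d a b e g * m - (kap x d a b e g m + kap x d a b e g m)"
    by (rule H2_exp0[OF IH x m w(3,1,2,4,5)]) (use s in simp)
  have e2: "hD (x*m) b a d e g = x * hD m b a d e g + hD x b a d e g * m - (kap x b a d e g m + kap x b a d e g m)"
    by (rule H2_exp0[OF IH x m w(2,1,3,4,5)]) (use s in simp)
  have A: "hD m b a d e g = - hD m d a b e g"
    using HLtr[OF IH m w(3,1,2,4,5), of 1 3] s pos by (simp add: hDT_def transpose_def)
  have B: "hD x b a d e g = - hD x d a b e g"
    using HLtr[OF IH x1 w(3,1,2,4,5), of 1 3] s pos by (simp add: hDT_def transpose_def)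
  have K: "kap x b a d e g m = - kap x d a b e g m"
    using K1L[OF IH x m w(3,1,2,4,5)] s by (simp add: eq_neg_iff_add_eq_0 add.commute)
  show ?thesis unfolding id_blk3[of a b "x*m" d e g] id_blk3[of a d "x*m" b e g] z1 z2 e1 e2 A B K
    by (simp add: algebra_simps)
qed

lemma H2c4:
  assumes IH: "\<forall>M<N. AllD M" and x: "x \<in> X" and m: "wd n m"
    and w: "wd na a" "wd nb b" "wd nc c" "wd nd d" "wd ng g"
    and s: "na + nb + nc + nd + Suc n + ng = N"
  shows "hD a b c d (x*m) g + hD a d c b (x*m) g = 0"
proof -
  note pos = wd_pos[OF m] wd_pos[OF w(1)] wd_pos[OF w(2)] wd_pos[OF w(3)] wd_pos[OF w(4)] wd_pos[OF w(5)]
  have x1: "wd 1 x" by (rule wd1[OF x])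
  have xm: "wd (Suc n) (x*m)" by (rule wdS[OF x m])
  have z1: "comm (comm c d) (comm (x*m) g) = 0"
    using ZL[OF IH w(3,4) xm w(5)] ZL[OF IH w(3,4,5) xm] s pos by (simp add: comm_comm2)
  have z2: "comm (comm a b) (comm (x*m) g) = 0"
    using ZL[OF IH w(1,2) xm w(5)] ZL[OF IH w(1,2,5) xm] s pos by (simp add: comm_comm2)
  have z3: "comm (comm c b) (comm (x*m) g) = 0"
    using ZL[OF IH w(3,2) xm w(5)] ZL[OF IH w(3,2,5) xm] s pos by (simp add: comm_comm2)
  have z4: "comm (comm a d) (comm (x*m) g) = 0"
    using ZL[OF IH w(1,4) xm w(5)] ZL[OF IH w(1,4,5) xm] s pos by (simp add: comm_comm2)
  have e1: "hD (x*m) g a b c d = x * hD m g a b c d + hD x g a b c d * m - (kap x g a b c d m + kap x g a b c d m)"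
    by (rule H2_exp0[OF IH x m w(5,1,2,3,4)]) (use s in simp)
  have e2: "hD (x*m) g a d c b = x * hD m g a d c b + hD x g a d c b * m - (kap x g a d c b m + kap x g a d c b m)"
    by (rule H2_exp0[OF IH x m w(5,1,4,3,2)]) (use s in simp)
  have A: "hD m g a d c b = - hD m g a b c d"
    using HLtr[OF IH m w(5,1,2,3,4), of 3 5] s pos by (simp add: hDT_def transpose_def)
  have B: "hD x g a d c b = - hD x g a b c d"
    using HLtr[OF IH x1 w(5,1,2,3,4), of 3 5] s pos by (simp add: hDT_def transpose_def)
  have F: "fF a d c b m = - fF a b c d m"
    using FLtr[OF IH w(1,2,3,4) m, of 1 3] s pos by (simp add: fT_def transpose_def)
  have K: "kap x g a d c b m = - kap x g a b c d m"
    unfolding kap_def F by simp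
  show ?thesis unfolding id_blk4[of a b c d "x*m" g] id_blk4[of a d c b "x*m" g] z1 z2 z3 z4 e1 e2 A B K
    by (simp add: algebra_simps)
qed

lemma H2_13:
  assumes IH: "\<forall>M<N. AllD M"
    and w: "wd na a" "wd nb b" "wd nc c" "wd nd d" "wd ne e" "wd ng g"
    and s: "na + nb + nc + nd + ne + ng = N"
  shows "hD a b c d e g + hD a d c b e g = 0"
proof -
  have core: "hD a b c d e g + hD a d c b e g = 0"
    if w: "wd na a" "wd nb b" "wd nc c" "wd nd d" "wd ne e" "wd ng g"
    and s: "na + nb + nc + nd + ne + ng = N" and l: "na \<ge> 2 \<or> nb \<ge> 2 \<or> nc \<ge> 2 \<or> ne \<ge> 2"
    for a b c d e g na nb nc nd ne ng
    using l
  proof (elim disjE)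
    assume "na \<ge> 2"
    then obtain x m where "x \<in> X" "wd (na - 1) m" "a = x * m" using wd_long[OF w(1)] by blast
    then show ?thesis using H2c0[OF IH, of x "na - 1" m] w s \<open>na \<ge> 2\<close> by simp
  next
    assume "nb \<ge> 2"
    then obtain x m where "x \<in> X" "wd (nb - 1) m" "b = x * m" using wd_long[OF w(2)] by blast
    then show ?thesis using H2c1[OF IH, of x "nb - 1" m] w s \<open>nb \<ge> 2\<close> by simp
  next
    assume "nc \<ge> 2"
    then obtain x m where "x \<in> X" "wd (nc - 1) m" "c = x * m" using wd_long[OF w(3)] by blast
    then show ?thesis using H2c2[OF IH, of x "nc - 1" m] w s \<open>nc \<ge> 2\<close> by simp
  next
    assume "ne \<ge> 2"
    then obtain x m where "x \<in> X" "wd (ne - 1) m" "e = x * m" using wd_long[OF w(5)] by blast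
    then show ?thesis using H2c4[OF IH, of x "ne - 1" m] w s \<open>ne \<ge> 2\<close> by simp
  qed
  note pos = wd_pos[OF w(1)] wd_pos[OF w(2)] wd_pos[OF w(3)] wd_pos[OF w(4)] wd_pos[OF w(5)] wd_pos[OF w(6)]
  consider "na \<ge> 2 \<or> nb \<ge> 2 \<or> nc \<ge> 2 \<or> ne \<ge> 2" | "nd \<ge> 2" | "ng \<ge> 2"
    | "na = 1" "nb = 1" "nc = 1" "nd = 1" "ne = 1" "ng = 1" using pos by linarith
  then show ?thesis
  proof cases
    case 1 then show ?thesis by (rule core[OF w s])
  next
    case 2
    have "hD a d c b e g + hD a b c d e g = 0" by (rule core[OF w(1,4,3,2,5,6)]) (use s 2 in auto)
    then show ?thesis by (simp add: add.commute)
  next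
    case 3
    have "hD a b c d g e + hD a d c b g e = 0" by (rule core[OF w(1-4,6,5)]) (use s 3 in auto)
    moreover have h: "hD a b c d e g = - hD a b c d g e" "hD a d c b e g = - hD a d c b g e"
      by (rule id_blk5)+
    ultimately show ?thesis unfolding h minus_add_distrib[symmetric] by simp
  next
    case 4
    have X: "a \<in> X" "b \<in> X" "c \<in> X" "d \<in> X" "e \<in> X" "g \<in> X" using w 4 by (auto intro: wd_one)
    have "\<forall>k<6. [a,b,c,d,e,g] ! k \<in> X" using X by (auto dest!: less6)
    from bH[OF this permutes_swap_id[of 1 "{..<6}" 3]]
    show ?thesis by (simp add: hDT_def transpose_def sign_swap_id)
  qed
qed

end


lemma id_t01: "hD b (a::'a::ring) c d e g = - hD a b c d e g"
  by (simp add: hD_def comm_def algebra_simps)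
lemma id_t23: "hD a b d (c::'a::ring) e g = - hD a b c d e g"
  by (simp add: hD_def comm_def algebra_simps)
lemma id_b2: "hD a b e g c (d::'a::ring) = hD a b c d e g - comm a b * comm (comm c d) (comm e g)"
  by (simp add: hD_def comm_def algebra_simps)

lemma sum_upd5: "(j::nat) < 5 \<Longrightarrow> (\<Sum>k<5. (f(j:=v)) k) + f j = (\<Sum>k<5. f k) + (v::nat)"
  by (auto simp: sum5 dest!: less5)

context partB begin

definition Good6 :: "nat \<Rightarrow> (nat \<Rightarrow> 'a) \<Rightarrow> bool" where
  "Good6 N y \<longleftrightarrow> (\<exists>dy. (\<forall>k<6. wd (dy k) (y k)) \<and> (\<Sum>k<6. dy k) = N)"

lemma Good6_perm:
  assumes \<rho>: "\<rho> permutes {..<6}" and g: "Good6 N y"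
  shows "Good6 N (y \<circ> \<rho>)"
proof -
  obtain dy where w: "\<forall>k<6. wd (dy k) (y k)" and s: "(\<Sum>k<6. dy k) = N" using g unfolding Good6_def by blast
  have "\<forall>k<6. wd ((dy \<circ> \<rho>) k) ((y \<circ> \<rho>) k)"
    using w permutes_in_image[OF \<rho>] by auto
  moreover have "(\<Sum>k<6. (dy \<circ> \<rho>) k) = N" using s sum.permute[OF \<rho>, of dy] by simp
  ultimately show ?thesis unfolding Good6_def by blast
qed

lemma Good6_perm_iff:
  assumes \<rho>: "\<rho> permutes {..<6}"
  shows "Good6 N (y \<circ> \<rho>) \<longleftrightarrow> Good6 N y"
proof
  assume "Good6 N (y \<circ> \<rho>)"
  from Good6_perm[OF permutes_inv[OF \<rho>] this] show "Good6 N y"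
    by (simp add: comp_assoc permutes_inv_o[OF \<rho>])
qed (rule Good6_perm[OF \<rho>])

lemma Rel_good:
  assumes \<rho>: "\<rho> permutes {..<6}" and h: "\<And>y. Good6 N y \<Longrightarrow> hDT (y \<circ> \<rho>) = of_int s * hDT y"
  shows "Rel {0} (\<lambda>y. if Good6 N y then hDT y else 0) s \<rho>"
  unfolding Rel_def using h Good6_perm_iff[OF \<rho>] by auto

lemma Good6_E:
  assumes "Good6 N y"
  obtains dy :: "nat \<Rightarrow> nat" where "wd (dy 0) (y 0)" "wd (dy 1) (y 1)" "wd (dy 2) (y 2)" "wd (dy 3) (y 3)" "wd (dy 4) (y 4)"
    "wd (dy 5) (y 5)" "dy 0 + dy 1 + dy 2 + dy 3 + dy 4 + dy 5 = N"
proof -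
  obtain dy where "\<forall>k<6. wd (dy k) (y k)" "(\<Sum>k<6. dy k) = N" using assms unfolding Good6_def by blast
  then show ?thesis by (intro that[of dy]) (auto simp: sum6)
qed

lemma H2_step:
  assumes IH: "\<forall>M<N. AllD M"
  shows "Hd N"
proof -
  define \<Phi> where "\<Phi> = (\<lambda>y. if Good6 N y then hDT y else 0)"
  have t01: "Rel {0} \<Phi> (-1) (transpose 0 1)" unfolding \<Phi>_def
  proof (rule Rel_good[OF permutes_swap_id])
    fix y :: "nat \<Rightarrow> 'a"
    show "hDT (y \<circ> transpose 0 1) = of_int (- 1) * hDT y"
      using id_t01[of "y 1" "y 0" "y 2" "y 3" "y 4" "y 5"] by (simp add: hDT_def transpose_def)
  qed simp_all
  have t23: "Rel {0} \<Phi> (-1) (transpose 2 3)" unfolding \<Phi>_def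
  proof (rule Rel_good[OF permutes_swap_id])
    fix y :: "nat \<Rightarrow> 'a"
    show "hDT (y \<circ> transpose 2 3) = of_int (- 1) * hDT y"
      using id_t23[of "y 0" "y 1" "y 3" "y 2" "y 4" "y 5"] by (simp add: hDT_def transpose_def)
  qed simp_all
  have t45: "Rel {0} \<Phi> (-1) (transpose 4 5)" unfolding \<Phi>_def
  proof (rule Rel_good[OF permutes_swap_id])
    fix y :: "nat \<Rightarrow> 'a"
    show "hDT (y \<circ> transpose 4 5) = of_int (- 1) * hDT y"
      using id_blk5[of "y 0" "y 1" "y 2" "y 3" "y 5" "y 4"] by (simp add: hDT_def transpose_def)
  qed simp_all
  have t13: "Rel {0} \<Phi> (-1) (transpose 1 3)" unfolding \<Phi>_def
  proof (rule Rel_good[OF permutes_swap_id])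
    fix y assume "Good6 N y"
    then obtain dy :: "nat \<Rightarrow> nat" where w: "wd (dy 0) (y 0)" "wd (dy 1) (y 1)" "wd (dy 2) (y 2)" "wd (dy 3) (y 3)" "wd (dy 4) (y 4)"
      "wd (dy 5) (y 5)" and s: "dy 0 + dy 1 + dy 2 + dy 3 + dy 4 + dy 5 = N" by (rule Good6_E)
    have "hD (y 0) (y 1) (y 2) (y 3) (y 4) (y 5) + hD (y 0) (y 3) (y 2) (y 1) (y 4) (y 5) = 0"
      by (rule H2_13[OF IH w s])
    then show "hDT (y \<circ> transpose 1 3) = of_int (- 1) * hDT y"
      by (simp add: hDT_def transpose_def eq_neg_iff_add_eq_0 add.commute)
  qed simp_all
  have b2: "Rel {0} \<Phi> 1 (transpose 2 4 \<circ> transpose 3 5)" unfolding \<Phi>_def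
  proof (rule Rel_good[OF permutes_tt])
    fix y assume "Good6 N y"
    then obtain dy :: "nat \<Rightarrow> nat" where w: "wd (dy 0) (y 0)" "wd (dy 1) (y 1)" "wd (dy 2) (y 2)" "wd (dy 3) (y 3)" "wd (dy 4) (y 4)"
      "wd (dy 5) (y 5)" and s: "dy 0 + dy 1 + dy 2 + dy 3 + dy 4 + dy 5 = N" by (rule Good6_E)
    note pos = wd_pos[OF w(1)] wd_pos[OF w(2)] wd_pos[OF w(3)] wd_pos[OF w(4)] wd_pos[OF w(5)] wd_pos[OF w(6)]
    have "comm (comm (y 2) (y 3)) (comm (y 4) (y 5)) = 0"
      using ZL[OF IH w(3,4,5,6)] ZL[OF IH w(3,4,6,5)] s pos
      by (simp add: comm_comm2)
    then show "hDT (y \<circ> (transpose 2 4 \<circ> transpose 3 5)) = of_int 1 * hDT y"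
      using id_b2[of "y 0" "y 1" "y 4" "y 5" "y 2" "y 3"] by (simp add: hDT_def transpose_def)
  qed simp_all
  show ?thesis unfolding Hd_def
  proof (intro allI impI)
    fix y :: "nat \<Rightarrow> 'a" and dy :: "nat \<Rightarrow> nat" and \<sigma> :: "nat \<Rightarrow> nat"
    assume w: "\<forall>k<6. wd (dy k) (y k)" and s: "(\<Sum>k<6. dy k) = N" and \<sigma>: "\<sigma> permutes {..<6}"
    have g: "Good6 N y" using w s unfolding Good6_def by blast
    have "Rel {0} \<Phi> (sign \<sigma>) \<sigma>" by (rule S6_gen[OF subgrp_zero t01 t23 t45 t13 b2 \<sigma>])
    then have "\<Phi> (y \<circ> \<sigma>) = of_int (sign \<sigma>) * \<Phi> y" unfolding Rel_def by auto
    then show "hDT (y \<circ> \<sigma>) = of_int (sign \<sigma>) * hDT y"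
      using g Good6_perm[OF \<sigma> g] unfolding \<Phi>_def by simp
  qed
qed

end


context partB begin

lemma DF0:
  assumes IH: "\<forall>M<N. AllD M" and x: "x \<in> X" and m: "wd n m"
    and w: "wd nb b" "wd nc c" "wd nd d" "wd ne e" and s: "Suc n + nb + nc + nd + ne = N"
  shows "fF (x*m) b c d e = x * fF m b c d e + fF x b c d e * m"
proof -
  have "c4 c d e m = 0" using ZL[OF IH w(2-4) m] s wd_pos[OF w(1)] by simp
  then show ?thesis by (simp add: E_f0)
qed

lemma DF1:
  assumes IH: "\<forall>M<N. AllD M" and x: "x \<in> X" and m: "wd n m"
    and w: "wd na a" "wd nc c" "wd nd d" "wd ne e" and s: "na + Suc n + nc + nd + ne = N"
  shows "fF a (x*m) c d e = x * fF a m c d e + fF a x c d e * m"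
proof -
  have "fF (x*m) a c d e = x * fF m a c d e + fF x a c d e * m"
    by (rule DF0[OF IH x m w]) (use s in simp)
  then show ?thesis by (simp add: E_f1[of a "x*m"] E_f1[of a m] E_f1[of a x])
qed

lemma DF2:
  assumes IH: "\<forall>M<N. AllD M" and H3: "H3d N" and H: "Hd N" and x: "x \<in> X" and m: "wd n m"
    and w: "wd na a" "wd nb b" "wd nd d" "wd ne e" and s: "na + nb + Suc n + nd + ne = N"
  shows "fF a b (x*m) d e = x * fF a b m d e + fF a b x d e * m"
proof -
  have x1: "wd 1 x" by (rule wd1[OF x])
  have h3: "hT a b x m d e = 0" using H3 w x1 m s unfolding H3d_def by fastforce
  have "hD a b x d m e = - hD a b x e m d"
    using H_tr[OF H w(1,2) x1 w(4) m w(3), of 3 5] s by (simp add: hDT_def transpose_def)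
  then show ?thesis using h3 by (simp add: E_f2)
qed

lemma DF3:
  assumes IH: "\<forall>M<N. AllD M" and H3: "H3d N" and H: "Hd N" and x: "x \<in> X" and m: "wd n m"
    and w: "wd na a" "wd nb b" "wd nc c" "wd ne e" and s: "na + nb + nc + Suc n + ne = N"
  shows "fF a b c (x*m) e = x * fF a b c m e + fF a b c x e * m"
proof -
  have "fF a b (x*m) c e = x * fF a b m c e + fF a b x c e * m"
    by (rule DF2[OF IH H3 H x m w]) (use s in simp)
  then show ?thesis by (simp add: E_f3[of a b c "x*m"] E_f3[of a b c m] E_f3[of a b c x])
qed

lemma DF4:
  assumes IH: "\<forall>M<N. AllD M" and H3: "H3d N" and x: "x \<in> X" and m: "wd n m"
    and w: "wd na a" "wd nb b" "wd nc c" "wd nd d" and s: "na + nb + nc + nd + Suc n = N"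
  shows "fF a b c d (x*m) = x * fF a b c d m + fF a b c d x * m"
proof -
  have x1: "wd 1 x" by (rule wd1[OF x])
  have h3: "hT a b x c d m = 0" using H3 w x1 m s unfolding H3d_def by fastforce
  then show ?thesis by (simp add: E_f4)
qed

lemma DFt:
  assumes IH: "\<forall>M<N. AllD M" and H3: "H3d N" and H: "Hd N"
    and w: "\<forall>k<5. wd (dy k) (y k)" and s: "(\<Sum>k<5. dy k) = N"
    and j: "j < 5" and yj: "y j = x * m" and x: "x \<in> X" and m: "wd n m" and dj: "dy j = Suc n"
  shows "fT y = x * fT (y(j := m)) + fT (y(j := x)) * m"
proof -
  have w0: "wd (dy 0) (y 0)" and w1: "wd (dy 1) (y 1)" and w2: "wd (dy 2) (y 2)"
    and w3: "wd (dy 3) (y 3)" and w4: "wd (dy 4) (y 4)" using w by auto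
  have s': "dy 0 + dy 1 + dy 2 + dy 3 + dy 4 = N" using s by (simp add: sum5)
  from less5[OF j] show ?thesis
  proof (elim disjE)
    assume "j = 0" then show ?thesis
      using DF0[OF IH x m w1 w2 w3 w4] yj dj s' by (simp add: fT_def)
  next
    assume "j = 1" then show ?thesis
      using DF1[OF IH x m w0 w2 w3 w4] yj dj s' by (simp add: fT_def)
  next
    assume "j = 2" then show ?thesis
      using DF2[OF IH H3 H x m w0 w1 w3 w4] yj dj s' by (simp add: fT_def)
  next
    assume "j = 3" then show ?thesis
      using DF3[OF IH H3 H x m w0 w1 w2 w4] yj dj s' by (simp add: fT_def)
  next
    assume "j = 4" then show ?thesis
      using DF4[OF IH H3 x m w0 w1 w2 w3] yj dj s' by (simp add: fT_def)
  qed
qed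

lemma F_step:
  assumes IH: "\<forall>M<N. AllD M" and H3: "H3d N" and H: "Hd N"
  shows "Fd N"
  unfolding Fd_def
proof (intro allI impI)
  fix y :: "nat \<Rightarrow> 'a" and dy :: "nat \<Rightarrow> nat" and \<sigma> :: "nat \<Rightarrow> nat"
  assume w: "\<forall>k<5. wd (dy k) (y k)" and s: "(\<Sum>k<5. dy k) = N" and \<sigma>: "\<sigma> permutes {..<5}"
  show "fT (y \<circ> \<sigma>) = of_int (sign \<sigma>) * fT y"
  proof (cases "\<exists>j<5. dy j \<ge> 2")
    case False
    have "\<forall>k<5. dy k = 1"
    proof (intro allI impI)
      fix k :: nat assume "k < 5"
      then have "wd (dy k) (y k)" "\<not> dy k \<ge> 2" using w False by auto
      then show "dy k = 1" using wd_pos by fastforce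
    qed
    then have "\<forall>k<5. y k \<in> X" using w wd_one by metis
    then show ?thesis by (rule bF[OF _ \<sigma>])
  next
    case True
    then obtain j where j: "j < 5" "dy j \<ge> 2" by blast
    then obtain x m where x: "x \<in> X" and m: "wd (dy j - 1) m" and yj: "y j = x * m"
      using wd_long w by blast
    define n where "n = dy j - 1"
    have dj: "dy j = Suc n" using j unfolding n_def by simp
    have m': "wd n m" using m unfolding n_def .
    have pos: "n \<ge> 1" using wd_pos[OF m'] .
    have x1: "wd 1 x" by (rule wd1[OF x])
    have wm: "\<forall>k<5. wd ((dy(j := n)) k) ((y(j := m)) k)" using w m' by auto
    have wx: "\<forall>k<5. wd ((dy(j := 1)) k) ((y(j := x)) k)" using w x1 by auto
    have sm: "(\<Sum>k<5. (dy(j := n)) k) < N" using sum_upd5[OF j(1), of dy n] s dj by simp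
    have sx: "(\<Sum>k<5. (dy(j := 1)) k) < N" using sum_upd5[OF j(1), of dy 1] s dj pos by simp
    have Fm: "Fd (\<Sum>k<5. (dy(j := n)) k)" using IH sm unfolding AllD_def by blast
    have Fx: "Fd (\<Sum>k<5. (dy(j := 1)) k)" using IH sx unfolding AllD_def by blast
    have em: "fT (y(j := m) \<circ> \<sigma>) = of_int (sign \<sigma>) * fT (y(j := m))"
      using Fm wm \<sigma> unfolding Fd_def by blast
    have ex: "fT (y(j := x) \<circ> \<sigma>) = of_int (sign \<sigma>) * fT (y(j := x))"
      using Fx wx \<sigma> unfolding Fd_def by blast
    have e1: "fT y = x * fT (y(j := m)) + fT (y(j := x)) * m"
      by (rule DFt[OF IH H3 H w s j(1) yj x m' dj])
    define j' where "j' = inv \<sigma> j"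
    have j': "j' < 5" using permutes_in_image[OF permutes_inv[OF \<sigma>]] j(1) unfolding j'_def by auto
    have sj: "\<sigma> j' = j" unfolding j'_def using permutes_inverses(1)[OF \<sigma>] by simp
    have upd: "(y \<circ> \<sigma>)(j' := v) = y(j := v) \<circ> \<sigma>" for v
    proof
      fix k
      have "\<sigma> k = j \<longleftrightarrow> k = j'" using sj permutes_inj[OF \<sigma>] by (auto dest: injD)
      then show "((y \<circ> \<sigma>)(j' := v)) k = (y(j := v) \<circ> \<sigma>) k" by auto
    qed
    have w\<sigma>: "\<forall>k<5. wd ((dy \<circ> \<sigma>) k) ((y \<circ> \<sigma>) k)" using w permutes_in_image[OF \<sigma>] by auto
    have s\<sigma>: "(\<Sum>k<5. (dy \<circ> \<sigma>) k) = N" using s sum.permute[OF \<sigma>, of dy] by simp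
    have e2: "fT (y \<circ> \<sigma>) = x * fT ((y \<circ> \<sigma>)(j' := m)) + fT ((y \<circ> \<sigma>)(j' := x)) * m"
      by (rule DFt[OF IH H3 H w\<sigma> s\<sigma> j']) (use yj sj x m' dj in auto)
    have c: "x * (of_int (sign \<sigma>) * A) = of_int (sign \<sigma>) * (x * A)" for A
    proof -
      have "x * of_int (sign \<sigma>) = of_int (sign \<sigma>) * x" by (simp add: mult_of_int_commute)
      then show ?thesis by (metis mult.assoc)
    qed
    show ?thesis unfolding e2 e1 upd em ex c
      by (simp add: distrib_left mult.assoc)
  qed
qed

lemma Z_step:
  assumes IH: "\<forall>M<N. AllD M" and F: "Fd N"
  shows "Zd N"
  unfolding Zd_def
proof (intro allI impI)
  fix a b c d na nb nc nd
  assume w: "wd na a" "wd nb b" "wd nc c" "wd nd d" and s: "na + nb + nc + nd = N"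
  note pos = wd_pos[OF w(1)] wd_pos[OF w(2)] wd_pos[OF w(3)] wd_pos[OF w(4)]
  have c0: "c4 (x*m) b c d = 0" if x: "x \<in> X" and m: "wd n m" and wb: "wd nb b" "wd nc c" "wd nd d"
    and s: "Suc n + nb + nc + nd = N" for x m n b c d nb nc nd
  proof -
    have x1: "wd 1 x" by (rule wd1[OF x])
    note pos = wd_pos[OF m] wd_pos[OF wb(1)] wd_pos[OF wb(2)] wd_pos[OF wb(3)]
    have z: "c4 m b c d = 0" "c4 x b c d = 0"
      "c4 x c d m = 0" "c4 x c d b = 0" "c4 x b c m = 0" "c4 x b c d = 0" "c4 x b d m = 0" "c4 x b d c = 0"
      using ZL[OF IH m wb] ZL[OF IH x1 wb] ZL[OF IH x1 wb(2,3) m] ZL[OF IH x1 wb(2,3,1)]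
        ZL[OF IH x1 wb(1,2) m] ZL[OF IH x1 wb(1,2,3)] ZL[OF IH x1 wb(1,3) m] ZL[OF IH x1 wb(1,3,2)]
        s pos by simp_all
    have f1: "fT ((!) [x,d,m,b,c] \<circ> transpose 1 4) = - fF x d m b c"
      by (rule F_tr[OF F x1 wb(3) m wb(1,2)]) (use s in simp_all)
    have f2: "fT ((!) [x,b,m,c,d] \<circ> transpose 0 2) = - fF x b m c d"
      by (rule F_tr[OF F x1 wb(1) m wb(2,3)]) (use s in simp_all)
    have f3: "fT ((!) [m,d,x,b,c] \<circ> transpose 1 4) = - fF m d x b c"
      by (rule F_tr[OF F m wb(3) x1 wb(1,2)]) (use s in simp_all)
    have "fF x c m b d = - fF x d m b c" "fF m b x c d = - fF x b m c d" "fF m c x b d = - fF m d x b c"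
      using f1 f2 f3 by (simp_all add: fT_def transpose_def)
    then show ?thesis unfolding E_z1 z by simp
  qed
  show "c4 a b c d = 0"
  proof (cases "na \<ge> 2")
    case True
    then obtain x m where x: "x \<in> X" and m: "wd (na - 1) m" and "a = x * m" using wd_long[OF w(1)] by blast
    then show ?thesis using c0[OF x m w(2) w(3) w(4)] s True by simp
  next
    case na: False
    show ?thesis
    proof (cases "nb \<ge> 2")
      case True
      then obtain x m where x: "x \<in> X" and m: "wd (nb - 1) m" and "b = x * m" using wd_long[OF w(2)] by blast
      then have "c4 b a c d = 0" using c0[OF x m w(1) w(3) w(4)] s True by simp
      then show ?thesis by (simp add: E_z2[of a b c d])
    next
      case nb: False
      show ?thesis
      proof (cases "nc \<ge> 2")
        case True
        then obtain x m where x: "x \<in> X" and m: "wd (nc - 1) m" and cc: "c = x * m" using wd_long[OF w(3)] by blast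
        have x1: "wd 1 x" by (rule wd1[OF x])
        note pm = wd_pos[OF m]
        have z: "c4 a b m d = 0" "c4 a b x d = 0" "c4 a b x m = 0"
          using ZL[OF IH w(1,2) m w(4)] ZL[OF IH w(1,2) x1 w(4)] ZL[OF IH w(1,2) x1 m] s pos pm True by simp_all
        have "fT ((!) [x,d,a,b,m] \<circ> transpose 0 4) = - fF x d a b m"
          by (rule F_tr[OF F x1 w(4,1,2) m]) (use s True in simp_all)
        then have "fF m d a b x = - fF x d a b m" by (simp add: fT_def transpose_def)
        then show ?thesis unfolding cc E_z3 z by simp
      next
        case nc: False
        show ?thesis
        proof (cases "nd \<ge> 2")
          case True
          then obtain x m where x: "x \<in> X" and m: "wd (nd - 1) m" and dd: "d = x * m" using wd_long[OF w(4)] by blast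
          have x1: "wd 1 x" by (rule wd1[OF x])
          note pm = wd_pos[OF m]
          have "c4 a b c m = 0" "c4 a b c x = 0"
            using ZL[OF IH w(1-3) m] ZL[OF IH w(1-3) x1] s pos pm True by simp_all
          then show ?thesis unfolding dd E_z4 by simp
        next
          case False
          with na nb nc pos have "na = 1" "nb = 1" "nc = 1" "nd = 1" by auto
          then show ?thesis using w by (intro bz) (auto intro: wd_one)
        qed
      qed
    qed
  qed
qed

lemma AllD_all: "AllD N"
proof (induction N rule: less_induct)
  case (less N)
  then have IH: "\<forall>M<N. AllD M" by blast
  have H3: "H3d N" by (rule H3_step[OF IH])
  have H: "Hd N" by (rule H2_step[OF IH])
  have F: "Fd N" by (rule F_step[OF IH H3 H])
  have Z: "Zd N" by (rule Z_step[OF IH F])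
  show ?case unfolding AllD_def using H3 H F Z by blast
qed

theorem words_c4: "wd na a \<Longrightarrow> wd nb b \<Longrightarrow> wd nc c \<Longrightarrow> wd nd d \<Longrightarrow> c4 a b c d = 0"
  using AllD_all[of "na + nb + nc + nd"] unfolding AllD_def Zd_def by blast

end


section \<open>The free ring: words and the left ideal\<close>

definition wp :: "nat list \<Rightarrow> fring" where "wp l = Poly_Mapping.single (Word l) 1"

lemma wp_Nil: "wp [] = 1"
  by (simp add: wp_def zero_word_def[symmetric])

lemma wp_Cons: "wp (i # l) = var i * wp l"
  by (simp add: wp_def var_def mult_single)

abbreviation LL :: "fring set" where "LL \<equiv> left_ideal_gen gens"

lemma LL_zero: "0 \<in> LL" by (rule left_ideal_gen.zero)
lemma LL_add: "a \<in> LL \<Longrightarrow> b \<in> LL \<Longrightarrow> a + b \<in> LL" by (rule left_ideal_gen.add)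
lemma LL_lmult: "a \<in> LL \<Longrightarrow> r * a \<in> LL" by (rule left_ideal_gen.lmult)
lemma LL_base: "a \<in> gens \<Longrightarrow> a \<in> LL" by (rule left_ideal_gen.base)
lemma LL_uminus: "a \<in> LL \<Longrightarrow> - a \<in> LL"
proof -
  assume "a \<in> LL"
  then have "(- 1) * a \<in> LL" by (rule LL_lmult)
  moreover have "(- 1) * a = - a" by (rule mult_minus1)
  ultimately show "- a \<in> LL" by (simp only:)
qed
lemma LL_diff: "a \<in> LL \<Longrightarrow> b \<in> LL \<Longrightarrow> a - b \<in> LL"
  unfolding diff_conv_add_uminus by (rule LL_add[OF _ LL_uminus])
lemma LL_subgrp: "subgrp LL"
  unfolding subgrp_def using LL_zero LL_add LL_uminus by blast

lemma rclose:
  assumes "\<And>l. a * wp l \<in> LL"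
  shows "a * r \<in> LL"
proof (rule frag_induction[of r UNIV "\<lambda>r. a * r \<in> LL"])
  show "a * 0 \<in> LL" using LL_zero by simp
  show "a * frag_of w \<in> LL" if "w \<in> UNIV" for w
  proof -
    obtain l where "w = Word l" by (cases w)
    then show ?thesis using assms[of l] by (simp add: wp_def)
  qed
  show "a * (p - q) \<in> LL" if "a * p \<in> LL" "a * q \<in> LL" for p q
    using LL_diff[OF that] by (simp add: right_diff_distrib)
qed simp

lemma lcomm_snoc: "xs \<noteq> [] \<Longrightarrow> lcomm (xs @ [y]) = comm (lcomm xs) (y::'a::ring)"
  by (cases xs) auto

lemma gens1: "length ns \<ge> 4 \<Longrightarrow> lcomm (map var ns) \<in> gens"
  unfolding gens_def by (intro UnI1 CollectI exI[of _ ns]) simp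

lemma gen1: "length ns \<ge> 4 \<Longrightarrow> lcomm (map var ns) \<in> LL"
  by (rule LL_base[OF gens1])

lemma gen1_RC: 
  assumes len: "length ns \<ge> 4" shows "lcomm (map var ns) * r \<in> LL"
proof -
  have H: "lcomm (map var ns) * wp l \<in> LL" if "length ns \<ge> 4" for ns l
    using that
  proof (induction l arbitrary: ns)
    case Nil then show ?case using gen1[OF Nil] by (simp add: wp_Nil)
  next
    case (Cons j l)
    have ne: "map var ns \<noteq> []" using Cons.prems by auto
    have c: "lcomm (map var ns) * var j = var j * lcomm (map var ns) + lcomm (map var (ns @ [j]))"
    proof -
      have "lcomm (map var (ns @ [j])) = comm (lcomm (map var ns)) (var j)"
        using lcomm_snoc[OF ne, of "var j"] by simp
      then show ?thesis by (simp add: comm_def)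
    qed
    have e: "lcomm (map var ns) * wp (j # l)
       = var j * (lcomm (map var ns) * wp l) + lcomm (map var (ns @ [j])) * wp l"
      unfolding wp_Cons mult.assoc[symmetric] c by (simp add: distrib_right mult.assoc)
    show ?case unfolding e
      by (rule LL_add[OF LL_lmult[OF Cons.IH[OF Cons.prems]] Cons.IH]) (use Cons.prems in simp)
  qed
  show ?thesis by (rule rclose) (rule H[OF len])
qed

lemma c4_var: "c4 (var a) (var b) (var c) (var d) = lcomm (map var [a,b,c,d])" by simp
lemma c5_var: "comm (c4 (var a) (var b) (var c) (var d)) (var e) = lcomm (map var [a,b,c,d,e])" by simp

lemma gen_c4: "c4 (var a) (var b) (var c) (var d) \<in> LL"
  unfolding c4_var by (rule gen1) simp
lemma gen_c5: "comm (c4 (var a) (var b) (var c) (var d)) (var e) \<in> LL"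
  unfolding c5_var by (rule gen1) simp
lemma gen_c4_RC: "c4 (var a) (var b) (var c) (var d) * r \<in> LL"
  unfolding c4_var by (rule gen1_RC) simp
lemma gen_c5_RC: "comm (c4 (var a) (var b) (var c) (var d)) (var e) * r \<in> LL"
  unfolding c5_var by (rule gen1_RC) simp

definition Ai :: "(nat \<Rightarrow> nat) \<Rightarrow> fring" where
  "Ai i = comm (var (i 0)) (var (i 1)) * c3 (var (i 2)) (var (i 3)) (var (i 4))"
definition Bi :: "(nat \<Rightarrow> nat) \<Rightarrow> fring" where
  "Bi i = comm (var (i 0)) (var (i 1)) * comm (var (i 2)) (var (i 3)) * comm (var (i 4)) (var (i 5))"

lemma gen2: "c3 (var a) (var b) (var c) * c3 (var d) (var e) (var g) \<in> LL"
proof (rule LL_base)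
  let ?i = "(!) [a,b,c,d,e,g]"
  have "c3 (var a) (var b) (var c) * c3 (var d) (var e) (var g)
    = lcomm [var (?i 0), var (?i 1), var (?i 2)] * lcomm [var (?i 3), var (?i 4), var (?i 5)]" by simp
  then show "c3 (var a) (var b) (var c) * c3 (var d) (var e) (var g) \<in> gens"
    unfolding gens_def by (intro UnI1 UnI2 CollectI exI[of _ ?i]) simp
qed

lemma gen3: "\<sigma> permutes {..<5} \<Longrightarrow> Ai i - of_int (sign \<sigma>) * Ai (i \<circ> \<sigma>) \<in> LL"
proof (rule LL_base)
  assume \<sigma>: "\<sigma> permutes {..<5}"
  have "Ai i - of_int (sign \<sigma>) * Ai (i \<circ> \<sigma>) =
     lcomm [var (i 0), var (i 1)] * lcomm [var (i 2), var (i 3), var (i 4)]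
       - of_int (sign \<sigma>) *
         (lcomm [var (i (\<sigma> 0)), var (i (\<sigma> 1))] *
          lcomm [var (i (\<sigma> 2)), var (i (\<sigma> 3)), var (i (\<sigma> 4))])" by (simp add: Ai_def)
  then show "Ai i - of_int (sign \<sigma>) * Ai (i \<circ> \<sigma>) \<in> gens"
    unfolding gens_def using \<sigma> by (intro UnI1 UnI2 CollectI exI[of _ i] exI[of _ \<sigma>]) simp
qed

lemma gen4: "\<sigma> permutes {..<6} \<Longrightarrow> Bi i - of_int (sign \<sigma>) * Bi (i \<circ> \<sigma>) \<in> LL"
proof (rule LL_base)
  assume \<sigma>: "\<sigma> permutes {..<6}"
  have "Bi i - of_int (sign \<sigma>) * Bi (i \<circ> \<sigma>) =
     lcomm [var (i 0), var (i 1)] * lcomm [var (i 2), var (i 3)] * lcomm [var (i 4), var (i 5)]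
       - of_int (sign \<sigma>) *
         (lcomm [var (i (\<sigma> 0)), var (i (\<sigma> 1))] * lcomm [var (i (\<sigma> 2)), var (i (\<sigma> 3))] *
          lcomm [var (i (\<sigma> 4)), var (i (\<sigma> 5))])" by (simp add: Bi_def)
  then show "Bi i - of_int (sign \<sigma>) * Bi (i \<circ> \<sigma>) \<in> gens"
    unfolding gens_def using \<sigma> by (intro UnI2 CollectI exI[of _ i] exI[of _ \<sigma>]) simp
qed


definition Phi :: "nat \<Rightarrow> (nat \<Rightarrow> nat) \<Rightarrow> fring" where
  "Phi j i = comm (var (i 0)) (var (i 1)) * comm (var (i 2)) (var (i 3)) * c3 (var (i 4)) (var (i 5)) (var j)"

lemma gen3_t: "a < 5 \<Longrightarrow> b < 5 \<Longrightarrow> a \<noteq> b \<Longrightarrow> Ai k + Ai (k \<circ> transpose a b) \<in> LL"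
  using gen3[of "transpose a b" k] by (simp add: permutes_swap_id sign_swap_id)

lemma gen3_e: "Ai k - Ai (k \<circ> (transpose 0 2 \<circ> transpose 1 3)) \<in> LL"
  using gen3[of "transpose 0 2 \<circ> transpose 1 3" k]
  by (simp add: permutes_compose permutes_swap_id sign_compose permutation_swap_id sign_swap_id)

lemma Phi_Ai: "Phi j i = comm (var (i 0)) (var (i 1)) * Ai ((!) [i 2, i 3, i 4, i 5, j])"
  by (simp add: Phi_def Ai_def mult.assoc)

lemma Phi_S4:
  fixes a b a' b' :: nat
  assumes ab: "a' < 5" "b' < 5" "a' \<noteq> b'"
    and e: "\<And>i. Phi j (i \<circ> transpose a b) = comm (var (i 0)) (var (i 1)) * Ai ((!) [i 2, i 3, i 4, i 5, j] \<circ> transpose a' b')"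
  shows "Rel LL (Phi j) (-1) (transpose a b)"
  unfolding Rel_def
proof
  fix i :: "nat \<Rightarrow> nat"
  have "Phi j (i \<circ> transpose a b) - of_int (- 1) * Phi j i
     = comm (var (i 0)) (var (i 1)) * (Ai ((!) [i 2, i 3, i 4, i 5, j]) + Ai ((!) [i 2, i 3, i 4, i 5, j] \<circ> transpose a' b'))"
    unfolding e Phi_Ai[of j i] by (simp add: distrib_left add.commute)
  then show "Phi j (i \<circ> transpose a b) - of_int (- 1) * Phi j i \<in> LL"
    using LL_lmult[OF gen3_t[OF ab]] by simp
qed

lemma Phi_b1: "Rel LL (Phi j) 1 (transpose 0 2 \<circ> transpose 1 3)"
  unfolding Rel_def
proof
  fix i :: "nat \<Rightarrow> nat"
  have e: "Phi j (i \<circ> (transpose 0 2 \<circ> transpose 1 3)) - of_int 1 * Phi j i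
    = c4 (var (i 2)) (var (i 3)) (var (i 0)) (var (i 1)) * c3 (var (i 4)) (var (i 5)) (var j)
      - c4 (var (i 2)) (var (i 3)) (var (i 1)) (var (i 0)) * c3 (var (i 4)) (var (i 5)) (var j)"
    by (simp add: Phi_def transpose_def comm_def algebra_simps)
  show "Phi j (i \<circ> (transpose 0 2 \<circ> transpose 1 3)) - of_int 1 * Phi j i \<in> LL"
    unfolding e by (rule LL_diff[OF gen_c4_RC gen_c4_RC])
qed

lemma Phi_t01: "Rel LL (Phi j) (-1) (transpose 0 1)"
  unfolding Rel_def
proof
  fix i :: "nat \<Rightarrow> nat"
  have "Phi j (i \<circ> transpose 0 1) - of_int (- 1) * Phi j i = 0"
    by (simp add: Phi_def transpose_def comm_def algebra_simps)
  then show "Phi j (i \<circ> transpose 0 1) - of_int (- 1) * Phi j i \<in> LL" using LL_zero by simp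
qed

lemma Phi_perm: "\<sigma> permutes {..<6} \<Longrightarrow> Rel LL (Phi j) (sign \<sigma>) \<sigma>"
proof -
  assume \<sigma>: "\<sigma> permutes {..<6}"
  have S: "subgrp LL" by (rule LL_subgrp)
  have m: "(-1::int) \<in> {1,-1}" "(1::int) \<in> {1,-1}" by auto
  have t23: "Rel LL (Phi j) (-1) (transpose 2 3)"
    by (rule Phi_S4[of 0 1]) (simp_all add: Phi_def Ai_def transpose_def mult.assoc)
  have t45: "Rel LL (Phi j) (-1) (transpose 4 5)"
    by (rule Phi_S4[of 2 3]) (simp_all add: Phi_def Ai_def transpose_def mult.assoc)
  have t24: "Rel LL (Phi j) (-1) (transpose 2 4)"
    by (rule Phi_S4[of 0 2]) (simp_all add: Phi_def Ai_def transpose_def mult.assoc)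
  have t35: "Rel LL (Phi j) (-1) (transpose 3 5)"
    by (rule Phi_S4[of 1 3]) (simp_all add: Phi_def Ai_def transpose_def mult.assoc)
  have t15: "Rel LL (Phi j) (-1) (transpose 1 5)"
    by (rule Rel_conj[OF S m(2) Phi_b1 t35]) (auto simp: fun_eq_iff transpose_def)
  have t13: "Rel LL (Phi j) (-1) (transpose 1 3)"
    by (rule Rel_conj[OF S m(1) t35 t15]) (auto simp: fun_eq_iff transpose_def)
  have b2: "Rel LL (Phi j) ((-1) * (-1)) (transpose 2 4 \<circ> transpose 3 5)"
    by (rule Rel_comp[OF S m(1) m(1) t24 t35])
  show ?thesis by (rule S6_gen[OF S Phi_t01 t23 t45 t13 _ \<sigma>]) (use b2 in simp)
qed

lemma comm_Bi:
  "comm (Bi i) (var j) - (Phi j i + Phi j i + Phi j i) \<in> LL"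
proof -
  define v where "v = (\<lambda>k. var (i k))"
  define x where "x = var j"
  define k1 where "k1 = (!) [i 4, i 5, i 2, i 3, j]"
  define k3 where "k3 = (!) [i 4, i 5, i 0, i 1, j]"
  let ?s = "transpose 0 2 \<circ> transpose (1::nat) 3"
  have e: "comm (Bi i) (var j) - (Phi j i + Phi j i + Phi j i)
    = comm (v 0) (v 1) * (comm (c4 (v 2) (v 3) x (v 4)) (v 5) - comm (c4 (v 2) (v 3) x (v 5)) (v 4))
      + comm (v 0) (v 1) * (Ai k1 - Ai (k1 \<circ> ?s))
      + (comm (c4 (v 0) (v 1) x (v 2)) (v 3) * comm (v 4) (v 5) - comm (c4 (v 0) (v 1) x (v 3)) (v 2) * comm (v 4) (v 5))
      + comm (v 2) (v 3) * (comm (c4 (v 0) (v 1) x (v 4)) (v 5) - comm (c4 (v 0) (v 1) x (v 5)) (v 4))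
      + comm (v 2) (v 3) * (Ai k3 - Ai (k3 \<circ> ?s))
      + (Phi j (i \<circ> ?s) - of_int 1 * Phi j i)"
    by (simp add: Bi_def Phi_def Ai_def v_def x_def k1_def k3_def transpose_def comm_def algebra_simps)
  have r: "Phi j (i \<circ> ?s) - of_int 1 * Phi j i \<in> LL" using Phi_b1 unfolding Rel_def by blast
  show ?thesis unfolding e x_def v_def
    by (intro LL_add LL_lmult LL_diff gen_c5 gen_c5_RC gen3_e r)
qed


lemma comm_prod: "comm (P * Q) x = P * comm Q x + comm P x * (Q::'a::ring)"
  by (simp add: comm_def algebra_simps)

lemma comm_Ai: "comm (Ai i) (var j) \<in> LL"
proof -
  have "comm (Ai i) (var j) = comm (var (i 0)) (var (i 1)) * c4 (var (i 2)) (var (i 3)) (var (i 4)) (var j)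
     + c3 (var (i 0)) (var (i 1)) (var j) * c3 (var (i 2)) (var (i 3)) (var (i 4))"
    unfolding Ai_def comm_prod ..
  then show ?thesis using LL_add[OF LL_lmult[OF gen_c4] gen2] by simp
qed

lemma gen_rvar: "g \<in> gens \<Longrightarrow> comm g (var j) \<in> LL"
proof -
  assume "g \<in> gens"
  then consider (k1) ns :: "nat list" where "g = lcomm (map var ns)" "length ns \<ge> 4"
    | (k2) i :: "nat \<Rightarrow> nat" where "g = c3 (var (i 0)) (var (i 1)) (var (i 2)) * c3 (var (i 3)) (var (i 4)) (var (i 5))"
    | (k3) i :: "nat \<Rightarrow> nat" and \<sigma> :: "nat \<Rightarrow> nat" where "g = Ai i - of_int (sign \<sigma>) * Ai (i \<circ> \<sigma>)" "\<sigma> permutes {..<5}"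
    | (k4) i :: "nat \<Rightarrow> nat" and \<sigma> :: "nat \<Rightarrow> nat" where "g = Bi i - of_int (sign \<sigma>) * Bi (i \<circ> \<sigma>)" "\<sigma> permutes {..<6}"
    unfolding gens_def Ai_def Bi_def by (auto simp del: lcomm.simps) (auto)
  then show ?thesis
  proof cases
    case k1
    have ne: "map var ns \<noteq> []" using k1 by auto
    have "comm g (var j) = lcomm (map var (ns @ [j]))" using lcomm_snoc[OF ne] k1 by simp
    then show ?thesis using gen1[of "ns @ [j]"] k1 by simp
  next
    case k2
    show ?thesis unfolding k2 comm_prod
      by (rule LL_add[OF LL_lmult[OF gen_c4] gen_c4_RC])
  next
    case k3
    have "comm g (var j) = comm (Ai i) (var j) - of_int (sign \<sigma>) * comm (Ai (i \<circ> \<sigma>)) (var j)"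
      unfolding k3 by (simp add: comm_def algebra_simps mult_of_int_commute)
    then show ?thesis using LL_diff[OF comm_Ai LL_lmult[OF comm_Ai]] by simp
  next
    case k4
    define s where "s = (of_int (sign \<sigma>) :: fring)"
    have ss: "s * s = 1" unfolding s_def by (simp flip: of_int_mult)
    have r: "Phi j (i \<circ> \<sigma>) - s * Phi j i \<in> LL"
      using Phi_perm[OF k4(2), of j] unfolding Rel_def s_def by blast
    have e: "comm g (var j) = (comm (Bi i) (var j) - (Phi j i + Phi j i + Phi j i))
       - s * (comm (Bi (i \<circ> \<sigma>)) (var j) - (Phi j (i \<circ> \<sigma>) + Phi j (i \<circ> \<sigma>) + Phi j (i \<circ> \<sigma>)))
       + (- (s + s + s)) * (Phi j (i \<circ> \<sigma>) - s * Phi j i)"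
    proof -
      have "comm g (var j) = comm (Bi i) (var j) - s * comm (Bi (i \<circ> \<sigma>)) (var j)"
        unfolding k4 s_def by (simp add: comm_def algebra_simps mult_of_int_commute)
      moreover have "s * (s * X) = X" for X by (simp add: mult.assoc[symmetric] ss)
      ultimately show ?thesis by (simp add: algebra_simps)
    qed
    show ?thesis unfolding e
      by (intro LL_add LL_diff LL_lmult comm_Bi r)
  qed
qed

lemma rmult_var: "g \<in> LL \<Longrightarrow> g * var j \<in> LL"
proof (induction rule: left_ideal_gen.induct)
  case (base a)
  have "a * var j = var j * a + comm a (var j)" by (simp add: comm_def)
  then show ?case using LL_add[OF LL_lmult[OF LL_base[OF base]] gen_rvar[OF base]] by simp
next
  case zero then show ?case using LL_zero by simp
next
  case (add a b) then show ?case using LL_add by (simp add: distrib_right)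
next
  case (lmult a r) then show ?case using LL_lmult[of "a * var j" r] by (simp add: mult.assoc)
qed

lemma rmult_wp: "g \<in> LL \<Longrightarrow> g * wp l \<in> LL"
proof (induction l arbitrary: g)
  case Nil then show ?case by (simp add: wp_Nil)
next
  case (Cons j l)
  have "g * var j \<in> LL" by (rule rmult_var[OF Cons.prems])
  from Cons.IH[OF this] show ?case by (simp add: wp_Cons mult.assoc)
qed

lemma LL_rmult: "g \<in> LL \<Longrightarrow> g * r \<in> LL"
  by (rule rclose) (rule rmult_wp)


section \<open>Quotients by two-sided ideals\<close>

definition tsi :: "fring set \<Rightarrow> bool" where
  "tsi I \<longleftrightarrow> 0 \<in> I \<and> (\<forall>a\<in>I. \<forall>b\<in>I. a + b \<in> I) \<and> (\<forall>a\<in>I. \<forall>r. r * a \<in> I \<and> a * r \<in> I)"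

definition relI :: "fring set \<Rightarrow> fring \<Rightarrow> fring \<Rightarrow> bool" where
  "relI I a b \<longleftrightarrow> (if 1 \<in> I then a = b else a - b \<in> I)"

lemma tsi_uminus: "tsi I \<Longrightarrow> a \<in> I \<Longrightarrow> - a \<in> I"
  unfolding tsi_def by (metis mult_minus1)
lemma tsi_diff: "tsi I \<Longrightarrow> a \<in> I \<Longrightarrow> b \<in> I \<Longrightarrow> a - b \<in> I"
  using tsi_uminus[of I b] unfolding tsi_def diff_conv_add_uminus by blast
lemma tsi_add: "tsi I \<Longrightarrow> a \<in> I \<Longrightarrow> b \<in> I \<Longrightarrow> a + b \<in> I"
  unfolding tsi_def by blast
lemma tsi_zero: "tsi I \<Longrightarrow> 0 \<in> I"
  unfolding tsi_def by blast
lemma tsi_lmult: "tsi I \<Longrightarrow> a \<in> I \<Longrightarrow> r * a \<in> I"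
  unfolding tsi_def by blast
lemma tsi_rmult: "tsi I \<Longrightarrow> a \<in> I \<Longrightarrow> a * r \<in> I"
  unfolding tsi_def by blast

lemma relI_equivp: "tsi I \<Longrightarrow> equivp (relI I)"
proof (rule equivpI)
  assume I: "tsi I"
  show "reflp (relI I)" unfolding relI_def reflp_def using tsi_zero[OF I] by simp
  show "symp (relI I)" unfolding relI_def symp_def
  proof (intro allI impI)
    fix a b assume h: "if 1 \<in> I then a = b else a - b \<in> I"
    have "b - a = - (a - b)" by simp
    then show "if 1 \<in> I then b = a else b - a \<in> I" using h tsi_uminus[OF I, of "a - b"] by auto
  qed
  show "transp (relI I)" unfolding relI_def transp_def
  proof (intro allI impI)
    fix a b c assume h: "if 1 \<in> I then a = b else a - b \<in> I" "if 1 \<in> I then b = c else b - c \<in> I"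
    have "a - c = (a - b) + (b - c)" by simp
    then show "if 1 \<in> I then a = c else a - c \<in> I" using h tsi_add[OF I, of "a - b" "b - c"] by auto
  qed
qed

lemma relI_eqI: "tsi I \<Longrightarrow> a = b \<Longrightarrow> relI I a b"
  using tsi_zero unfolding relI_def by auto

lemma relI_plus: "tsi I \<Longrightarrow> relI I a b \<Longrightarrow> relI I c d \<Longrightarrow> relI I (a + c) (b + d)"
  unfolding relI_def using tsi_add[of I "a - b" "c - d"] by (auto simp: algebra_simps)
lemma relI_uminus: "tsi I \<Longrightarrow> relI I a b \<Longrightarrow> relI I (- a) (- b)"
  unfolding relI_def using tsi_uminus[of I "a - b"] by (auto simp: algebra_simps)
lemma relI_minus: "tsi I \<Longrightarrow> relI I a b \<Longrightarrow> relI I c d \<Longrightarrow> relI I (a - c) (b - d)"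
  unfolding relI_def using tsi_diff[of I "a - b" "c - d"] by (auto simp: algebra_simps)
lemma relI_times: "tsi I \<Longrightarrow> relI I a b \<Longrightarrow> relI I c d \<Longrightarrow> relI I (a * c) (b * d)"
proof -
  assume I: "tsi I" and h: "relI I a b" "relI I c d"
  have "a * c - b * d = (a - b) * c + b * (c - d)" by (simp add: algebra_simps)
  then show ?thesis using h tsi_add[OF I tsi_rmult[OF I, of "a - b" c] tsi_lmult[OF I, of "c - d" b]]
    unfolding relI_def by auto
qed
lemma relI_01: "tsi I \<Longrightarrow> \<not> relI I 0 1"
proof
  assume I: "tsi I" and h: "relI I 0 1"
  show False
  proof (cases "1 \<in> I")
    case True then show False using h unfolding relI_def by simp
  next
    case False
    then have "0 - 1 \<in> I" using h unfolding relI_def by simp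
    then have "- (0 - 1) \<in> I" by (rule tsi_uminus[OF I])
    then show False using False by simp
  qed
qed

lemma relI_zero_iff: "tsi I \<Longrightarrow> 1 \<notin> I \<Longrightarrow> relI I a 0 \<longleftrightarrow> a \<in> I"
  unfolding relI_def by simp

lemma tsi_LL: "tsi LL"
  unfolding tsi_def using LL_zero LL_add LL_lmult LL_rmult by blast

lemma tsi_T4: "tsi T4"
  unfolding tsi_def T4_def using ideal_gen.zero ideal_gen.add ideal_gen.lmult ideal_gen.rmult by blast

quotient_type qL = fring / "relI LL"
  by (rule relI_equivp[OF tsi_LL])

instantiation qL :: ring_1
begin
lift_definition zero_qL :: qL is 0 .
lift_definition one_qL :: qL is 1 .
lift_definition plus_qL :: "qL \<Rightarrow> qL \<Rightarrow> qL" is "(+)" by (rule relI_plus[OF tsi_LL])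
lift_definition uminus_qL :: "qL \<Rightarrow> qL" is uminus by (rule relI_uminus[OF tsi_LL])
lift_definition minus_qL :: "qL \<Rightarrow> qL \<Rightarrow> qL" is "(-)" by (rule relI_minus[OF tsi_LL])
lift_definition times_qL :: "qL \<Rightarrow> qL \<Rightarrow> qL" is "(*)" by (rule relI_times[OF tsi_LL])
instance
proof
  fix a b c :: qL
  show "a * b * c = a * (b * c)" by transfer (rule relI_eqI[OF tsi_LL], simp add: mult.assoc)
  show "1 * a = a" by transfer (rule relI_eqI[OF tsi_LL], simp)
  show "a * 1 = a" by transfer (rule relI_eqI[OF tsi_LL], simp)
  show "a + b + c = a + (b + c)" by transfer (rule relI_eqI[OF tsi_LL], simp add: add.assoc)
  show "a + b = b + a" by transfer (rule relI_eqI[OF tsi_LL], simp add: add.commute)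
  show "0 + a = a" by transfer (rule relI_eqI[OF tsi_LL], simp)
  show "- a + a = 0" by transfer (rule relI_eqI[OF tsi_LL], simp)
  show "a - b = a + - b" by transfer (rule relI_eqI[OF tsi_LL], simp)
  show "(a + b) * c = a * c + b * c" by transfer (rule relI_eqI[OF tsi_LL], simp add: distrib_right)
  show "a * (b + c) = a * b + a * c" by transfer (rule relI_eqI[OF tsi_LL], simp add: distrib_left)
  show "(0::qL) \<noteq> 1" by transfer (rule relI_01[OF tsi_LL])
qed
end

quotient_type qT = fring / "relI T4"
  by (rule relI_equivp[OF tsi_T4])

instantiation qT :: ring_1
begin
lift_definition zero_qT :: qT is 0 .
lift_definition one_qT :: qT is 1 .
lift_definition plus_qT :: "qT \<Rightarrow> qT \<Rightarrow> qT" is "(+)" by (rule relI_plus[OF tsi_T4])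
lift_definition uminus_qT :: "qT \<Rightarrow> qT" is uminus by (rule relI_uminus[OF tsi_T4])
lift_definition minus_qT :: "qT \<Rightarrow> qT \<Rightarrow> qT" is "(-)" by (rule relI_minus[OF tsi_T4])
lift_definition times_qT :: "qT \<Rightarrow> qT \<Rightarrow> qT" is "(*)" by (rule relI_times[OF tsi_T4])
instance
proof
  fix a b c :: qT
  show "a * b * c = a * (b * c)" by transfer (rule relI_eqI[OF tsi_T4], simp add: mult.assoc)
  show "1 * a = a" by transfer (rule relI_eqI[OF tsi_T4], simp)
  show "a * 1 = a" by transfer (rule relI_eqI[OF tsi_T4], simp)
  show "a + b + c = a + (b + c)" by transfer (rule relI_eqI[OF tsi_T4], simp add: add.assoc)
  show "a + b = b + a" by transfer (rule relI_eqI[OF tsi_T4], simp add: add.commute)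
  show "0 + a = a" by transfer (rule relI_eqI[OF tsi_T4], simp)
  show "- a + a = 0" by transfer (rule relI_eqI[OF tsi_T4], simp)
  show "a - b = a + - b" by transfer (rule relI_eqI[OF tsi_T4], simp)
  show "(a + b) * c = a * c + b * c" by transfer (rule relI_eqI[OF tsi_T4], simp add: distrib_right)
  show "a * (b + c) = a * b + a * c" by transfer (rule relI_eqI[OF tsi_T4], simp add: distrib_left)
  show "(0::qT) \<noteq> 1" by transfer (rule relI_01[OF tsi_T4])
qed
end


lemma absT_add: "abs_qT (a + b) = abs_qT a + abs_qT b" by (simp add: plus_qT.abs_eq)
lemma absT_mult: "abs_qT (a * b) = abs_qT a * abs_qT b" by (simp add: times_qT.abs_eq)
lemma absT_minus: "abs_qT (a - b) = abs_qT a - abs_qT b" by (simp add: minus_qT.abs_eq)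
lemma absT_comm: "abs_qT (comm a b) = comm (abs_qT a) (abs_qT b)" by (simp add: comm_def absT_mult absT_minus)
lemma absT_zero: "abs_qT 0 = 0" by (simp add: zero_qT_def)
lemma absT_one: "abs_qT 1 = 1" by (simp add: one_qT_def)

lemma absL_add: "abs_qL (a + b) = abs_qL a + abs_qL b" by (simp add: plus_qL.abs_eq)
lemma absL_mult: "abs_qL (a * b) = abs_qL a * abs_qL b" by (simp add: times_qL.abs_eq)
lemma absL_minus: "abs_qL (a - b) = abs_qL a - abs_qL b" by (simp add: minus_qL.abs_eq)
lemma absL_comm: "abs_qL (comm a b) = comm (abs_qL a) (abs_qL b)" by (simp add: comm_def absL_mult absL_minus)
lemma absL_zero: "abs_qL 0 = 0" by (simp add: zero_qL_def)
lemma absL_one: "abs_qL 1 = 1" by (simp add: one_qL_def)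

lemma of_int_hom:
  fixes h :: "'a::ring_1 \<Rightarrow> 'b::ring_1"
  assumes "h 1 = 1" "\<And>a b. h (a - b) = h a - h b"
  shows "h (of_int k) = of_int k"
proof -
  have h0: "h 0 = 0" using assms(2)[of 0 0] by simp
  have hn: "h (of_nat n) = of_nat n" for n
  proof (induction n)
    case 0 then show ?case using h0 by simp
  next
    case (Suc n)
    have "h (of_nat (Suc n)) = h (of_nat n - (- 1))" by (simp add: add.commute)
    also have "\<dots> = h (of_nat n) - h (- 1)" by (rule assms(2))
    also have "h (- 1) = h (0 - 1)" by simp
    also have "\<dots> = h 0 - h 1" by (rule assms(2))
    also have "\<dots> = - 1" using assms(1) h0 by simp
    finally show ?case using Suc by simp
  qed
  show ?thesis
  proof (cases k rule: int_cases)
    case (nonneg n) then show ?thesis using hn[of n] by simp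
  next
    case (neg n)
    have "h (of_int k) = h (0 - of_nat (Suc n))" using neg by simp
    also have "\<dots> = h 0 - h (of_nat (Suc n))" by (rule assms(2))
    also have "\<dots> = - of_nat (Suc n)" using h0 hn[of "Suc n"] by simp
    finally show ?thesis using neg by simp
  qed
qed

lemma absT_of_int: "abs_qT (of_int k) = of_int k"
  by (rule of_int_hom) (simp_all add: absT_one absT_minus)
lemma absL_of_int: "abs_qL (of_int k) = of_int k"
  by (rule of_int_hom) (simp_all add: absL_one absL_minus)

lemma absT_eq0: "1 \<notin> T4 \<Longrightarrow> abs_qT a = 0 \<longleftrightarrow> a \<in> T4"
  using qT.abs_eq_iff[of a 0] relI_zero_iff[OF tsi_T4] by (simp add: zero_qT_def)
lemma absL_eq0: "1 \<notin> LL \<Longrightarrow> abs_qL a = 0 \<longleftrightarrow> a \<in> LL"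
  using qL.abs_eq_iff[of a 0] relI_zero_iff[OF tsi_LL] by (simp add: zero_qL_def)

section \<open>Part A applied: LL is contained in T4\<close>

lemma foldl_T4: "x \<in> T4 \<Longrightarrow> foldl comm x rest \<in> T4"
proof (induction rest arbitrary: x)
  case Nil then show ?case by simp
next
  case (Cons y rest)
  have "comm x y \<in> T4"
    unfolding comm_def using tsi_diff[OF tsi_T4 tsi_rmult[OF tsi_T4 Cons.prems] tsi_lmult[OF tsi_T4 Cons.prems]] .
  then show ?case using Cons.IH by simp
qed

lemma lcomm4_T4: "lcomm [a, b, c, d] \<in> T4"
  unfolding T4_def by (rule ideal_gen.base) blast

lemma gens1_T4: "length ns \<ge> 4 \<Longrightarrow> lcomm (map var ns) \<in> T4"
proof -
  assume "length ns \<ge> 4"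
  then obtain a b c d rest where "ns = a # b # c # d # rest"
    by (auto simp: Suc_le_length_iff numeral_eq_Suc)
  then have "lcomm (map var ns) = foldl comm (lcomm [var a, var b, var c, var d]) (map var rest)" by simp
  then show ?thesis using foldl_T4[OF lcomm4_T4] by simp
qed

lemma LL_T4: "LL \<subseteq> T4"
proof (cases "1 \<in> T4")
  case True
  have "r \<in> T4" for r using tsi_lmult[OF tsi_T4 True, of r] by simp
  then show ?thesis by blast
next
  case False
  interpret A: partA "UNIV :: qT set"
  proof
    fix a b c d :: qT
    have *: "relI T4 (((a*b - b*a)*c - c*(a*b - b*a))*d - d*((a*b - b*a)*c - c*(a*b - b*a))) 0" for a b c d
      using lcomm4_T4[of a b c d] False by (simp add: relI_def comm_def)
    show "comm (comm (comm a b) c) d = 0"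
      unfolding comm_def by (transfer fixing: ) (rule *)
  qed
  let ?v = "\<lambda>k. abs_qT (var k)"
  have gT: "g \<in> T4" if g: "g \<in> gens" for g
  proof -
    from g consider (k1) ns :: "nat list" where "g = lcomm (map var ns)" "length ns \<ge> 4"
      | (k2) i :: "nat \<Rightarrow> nat" where "g = hT (var (i 0)) (var (i 1)) (var (i 2)) (var (i 3)) (var (i 4)) (var (i 5))"
      | (k3) i :: "nat \<Rightarrow> nat" and \<sigma> :: "nat \<Rightarrow> nat" where "g = Ai i - of_int (sign \<sigma>) * Ai (i \<circ> \<sigma>)" "\<sigma> permutes {..<5}"
      | (k4) i :: "nat \<Rightarrow> nat" and \<sigma> :: "nat \<Rightarrow> nat" where "g = Bi i - of_int (sign \<sigma>) * Bi (i \<circ> \<sigma>)" "\<sigma> permutes {..<6}"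
      unfolding gens_def Ai_def Bi_def hT_def by (auto simp del: lcomm.simps) (auto)
    then show ?thesis
    proof cases
      case k1 then show ?thesis using gens1_T4 by simp
    next
      case k2
      have "abs_qT g = hT (?v (i 0)) (?v (i 1)) (?v (i 2)) (?v (i 3)) (?v (i 4)) (?v (i 5))"
        unfolding k2 hT_def by (simp add: absT_mult absT_comm)
      then have "abs_qT g = 0" by (simp add: A.A_h3)
      then show ?thesis using absT_eq0[OF False] by simp
    next
      case k3
      define y where "y = ?v \<circ> i"
      have e1: "abs_qT (Ai i) = fT y" unfolding Ai_def fT_def fF_def y_def by (simp add: absT_mult absT_comm)
      have e2: "abs_qT (Ai (i \<circ> \<sigma>)) = fT (y \<circ> \<sigma>)" unfolding Ai_def fT_def fF_def y_def by (simp add: absT_mult absT_comm)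
      have "abs_qT g = fT y - of_int (sign \<sigma>) * fT (y \<circ> \<sigma>)"
        unfolding k3 absT_minus absT_mult absT_of_int e1 e2 ..
      also have "\<dots> = 0" unfolding A.A_F[OF k3(2)] by (simp add: mult.assoc[symmetric] flip: of_int_mult)
      finally show ?thesis using absT_eq0[OF False] by simp
    next
      case k4
      define y where "y = ?v \<circ> i"
      have e1: "abs_qT (Bi i) = hDT y" unfolding Bi_def hDT_def hD_def y_def by (simp add: absT_mult absT_comm)
      have e2: "abs_qT (Bi (i \<circ> \<sigma>)) = hDT (y \<circ> \<sigma>)" unfolding Bi_def hDT_def hD_def y_def by (simp add: absT_mult absT_comm)
      have "abs_qT g = hDT y - of_int (sign \<sigma>) * hDT (y \<circ> \<sigma>)"
        unfolding k4 absT_minus absT_mult absT_of_int e1 e2 ..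
      also have "\<dots> = 0" unfolding A.A_H[OF k4(2)] by (simp add: mult.assoc[symmetric] flip: of_int_mult)
      finally show ?thesis using absT_eq0[OF False] by simp
    qed
  qed
  show ?thesis
  proof
    fix a assume "a \<in> LL"
    then show "a \<in> T4"
    proof (induction rule: left_ideal_gen.induct)
      case (base a) then show ?case by (rule gT)
    next
      case zero then show ?case by (rule tsi_zero[OF tsi_T4])
    next
      case (add a b) then show ?case using tsi_add[OF tsi_T4] by blast
    next
      case (lmult a r) then show ?case using tsi_lmult[OF tsi_T4] by blast
    qed
  qed
qed


lemma lin_zero:
  fixes \<Phi> :: "fring \<Rightarrow> 'b::ab_group_add"
  assumes "\<Phi> 0 = 0" "\<And>p q. \<Phi> (p - q) = \<Phi> p - \<Phi> q" "\<And>l. \<Phi> (wp l) = 0"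
  shows "\<Phi> r = 0"
proof (rule frag_induction[of r UNIV "\<lambda>r. \<Phi> r = 0"])
  show "\<Phi> 0 = 0" by (rule assms(1))
  show "\<Phi> (frag_of w) = 0" if "w \<in> UNIV" for w
  proof -
    obtain l where "w = Word l" by (cases w)
    then show ?thesis using assms(3)[of l] by (simp add: wp_def)
  qed
  show "\<Phi> (p - q) = 0" if "\<Phi> p = 0" "\<Phi> q = 0" for p q using that assms(2) by simp
qed simp

lemma c4_lin1: "c4 (a - a') b c (d::'a::ring) = c4 a b c d - c4 a' b c d" by (simp add: comm_def algebra_simps)
lemma c4_lin2: "c4 a (b - b') c (d::'a::ring) = c4 a b c d - c4 a b' c d" by (simp add: comm_def algebra_simps)
lemma c4_lin3: "c4 a b (c - c') (d::'a::ring) = c4 a b c d - c4 a b c' d" by (simp add: comm_def algebra_simps)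
lemma c4_lin4: "c4 a b c (d - d'::'a::ring) = c4 a b c d - c4 a b c d'" by (simp add: comm_def algebra_simps)
lemma comm_one: "comm 1 (x::'a::ring_1) = 0" "comm x (1::'a) = 0" by (simp_all add: comm_def)

lemma T4_LL: "T4 \<subseteq> LL"
proof (cases "1 \<in> LL")
  case True
  have "r \<in> LL" for r using LL_lmult[OF True, of r] by simp
  then show ?thesis by blast
next
  case False
  define X where "X = range (\<lambda>i. abs_qL (var i))"
  have g0: "abs_qL g = 0" if "g \<in> LL" for g using absL_eq0[OF False] that by simp
  have Xe: "\<exists>i. y = abs_qL (var i)" if "y \<in> X" for y using that unfolding X_def by blast
  interpret B: partB X
  proof
    fix a b c d assume h: "a \<in> X" "b \<in> X" "c \<in> X" "d \<in> X"
    then obtain ia ib ic id where e: "a = abs_qL (var ia)" "b = abs_qL (var ib)" "c = abs_qL (var ic)" "d = abs_qL (var id)"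
      using Xe by metis
    have "c4 a b c d = abs_qL (c4 (var ia) (var ib) (var ic) (var id))" unfolding e by (simp add: absL_comm)
    then show "c4 a b c d = 0" using g0[OF gen_c4] by simp
  next
    fix a b c d e g assume h: "a \<in> X" "b \<in> X" "c \<in> X" "d \<in> X" "e \<in> X" "g \<in> X"
    then obtain ia ib ic id ie ig where e: "a = abs_qL (var ia)" "b = abs_qL (var ib)" "c = abs_qL (var ic)"
      "d = abs_qL (var id)" "e = abs_qL (var ie)" "g = abs_qL (var ig)"
      using Xe by metis
    have "hT a b c d e g = abs_qL (c3 (var ia) (var ib) (var ic) * c3 (var id) (var ie) (var ig))"
      unfolding e hT_def by (simp add: absL_comm absL_mult)
    then show "hT a b c d e g = 0" using g0[OF gen2] by simp
  next
    fix y :: "nat \<Rightarrow> qL" and \<sigma> :: "nat \<Rightarrow> nat" assume y: "\<forall>k<5. y k \<in> X" and \<sigma>: "\<sigma> permutes {..<5}"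
    define i where "i = (\<lambda>k. SOME j. y k = abs_qL (var j))"
    have yi: "y k = abs_qL (var (i k))" if "k < 5" for k
      using Xe[OF y[rule_format, OF that]] unfolding i_def by (rule someI_ex)
    have yi': "y (\<sigma> k) = abs_qL (var (i (\<sigma> k)))" if "k < 5" for k
      using yi permutes_in_image[OF \<sigma>] that by auto
    have e1: "fT y = abs_qL (Ai i)" unfolding fT_def fF_def Ai_def by (simp add: yi absL_comm absL_mult)
    have e2: "fT (y \<circ> \<sigma>) = abs_qL (Ai (i \<circ> \<sigma>))" unfolding fT_def fF_def Ai_def
      by (simp add: yi' absL_comm absL_mult)
    have "abs_qL (Ai i - of_int (sign \<sigma>) * Ai (i \<circ> \<sigma>)) = 0" by (rule g0[OF gen3[OF \<sigma>]])
    then have r: "fT y = of_int (sign \<sigma>) * fT (y \<circ> \<sigma>)" unfolding e1 e2 absL_minus absL_mult absL_of_int by simp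
    show "fT (y \<circ> \<sigma>) = of_int (sign \<sigma>) * fT y"
      unfolding r by (simp add: mult.assoc[symmetric] flip: of_int_mult)
  next
    fix y :: "nat \<Rightarrow> qL" and \<sigma> :: "nat \<Rightarrow> nat" assume y: "\<forall>k<6. y k \<in> X" and \<sigma>: "\<sigma> permutes {..<6}"
    define i where "i = (\<lambda>k. SOME j. y k = abs_qL (var j))"
    have yi: "y k = abs_qL (var (i k))" if "k < 6" for k
      using Xe[OF y[rule_format, OF that]] unfolding i_def by (rule someI_ex)
    have yi': "y (\<sigma> k) = abs_qL (var (i (\<sigma> k)))" if "k < 6" for k
      using yi permutes_in_image[OF \<sigma>] that by auto
    have e1: "hDT y = abs_qL (Bi i)" unfolding hDT_def hD_def Bi_def by (simp add: yi absL_comm absL_mult)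
    have e2: "hDT (y \<circ> \<sigma>) = abs_qL (Bi (i \<circ> \<sigma>))" unfolding hDT_def hD_def Bi_def
      by (simp add: yi' absL_comm absL_mult)
    have "abs_qL (Bi i - of_int (sign \<sigma>) * Bi (i \<circ> \<sigma>)) = 0" by (rule g0[OF gen4[OF \<sigma>]])
    then have r: "hDT y = of_int (sign \<sigma>) * hDT (y \<circ> \<sigma>)" unfolding e1 e2 absL_minus absL_mult absL_of_int by simp
    show "hDT (y \<circ> \<sigma>) = of_int (sign \<sigma>) * hDT y"
      unfolding r by (simp add: mult.assoc[symmetric] flip: of_int_mult)
  qed
  have wdl: "B.wd (length l) (abs_qL (wp l))" if "l \<noteq> []" for l
    using that
  proof (induction l)
    case Nil then show ?case by simp
  next
    case (Cons j l)
    have x: "abs_qL (var j) \<in> X" unfolding X_def by blast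
    show ?case
    proof (cases "l = []")
      case True
      then show ?thesis using B.wd1[OF x] by (simp add: wp_Cons wp_Nil absL_mult absL_one)
    next
      case False
      then show ?thesis using B.wdS[OF x Cons.IH[OF False]] by (simp add: wp_Cons absL_mult)
    qed
  qed
  have w4: "c4 (abs_qL (wp l1)) (abs_qL (wp l2)) (abs_qL (wp l3)) (abs_qL (wp l4)) = 0" for l1 l2 l3 l4
  proof (cases "l1 = [] \<or> l2 = [] \<or> l3 = [] \<or> l4 = []")
    case True
    then show ?thesis by (auto simp: wp_Nil absL_one comm_one)
  next
    case False
    then show ?thesis using B.words_c4[OF wdl wdl wdl wdl] by blast
  qed
  have all4: "c4 (abs_qL a) (abs_qL b) (abs_qL c) (abs_qL d) = 0" for a b c d
  proof -
    have s1: "c4 (abs_qL (wp l1)) (abs_qL (wp l2)) (abs_qL (wp l3)) (abs_qL d) = 0" for l1 l2 l3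
      by (rule lin_zero[where \<Phi> = "\<lambda>d. c4 (abs_qL (wp l1)) (abs_qL (wp l2)) (abs_qL (wp l3)) (abs_qL d)"])
        (simp_all add: absL_zero absL_minus c4_lin4 w4)
    have s2: "c4 (abs_qL (wp l1)) (abs_qL (wp l2)) (abs_qL c) (abs_qL d) = 0" for l1 l2
      by (rule lin_zero[where \<Phi> = "\<lambda>c. c4 (abs_qL (wp l1)) (abs_qL (wp l2)) (abs_qL c) (abs_qL d)"])
        (simp_all add: absL_zero absL_minus c4_lin3 s1)
    have s3: "c4 (abs_qL (wp l1)) (abs_qL b) (abs_qL c) (abs_qL d) = 0" for l1
      by (rule lin_zero[where \<Phi> = "\<lambda>b. c4 (abs_qL (wp l1)) (abs_qL b) (abs_qL c) (abs_qL d)"])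
        (simp_all add: absL_zero absL_minus c4_lin2 s2)
    show ?thesis
      by (rule lin_zero[where \<Phi> = "\<lambda>a. c4 (abs_qL a) (abs_qL b) (abs_qL c) (abs_qL d)"])
        (simp_all add: absL_zero absL_minus c4_lin1 s3)
  qed
  have base4: "lcomm [a, b, c, d] \<in> LL" for a b c d
  proof -
    have "abs_qL (lcomm [a, b, c, d]) = 0" using all4[of a b c d] by (simp add: absL_comm)
    then show ?thesis using absL_eq0[OF False] by simp
  qed
  show ?thesis
  proof
    fix a assume "a \<in> T4"
    then show "a \<in> LL" unfolding T4_def
    proof (induction rule: ideal_gen.induct)
      case (base a) then show ?case using base4 by blast
    next
      case zero then show ?case by (rule LL_zero)
    next
      case (add a b) then show ?case using LL_add by blast
    next
      case (lmult a r) then show ?case using LL_lmult by blast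
    next
      case (rmult a r) then show ?case using LL_rmult by blast
    qed
  qed
qed

theorem lemma3p2:
  shows "T4 = left_ideal_gen gens"
  using T4_LL LL_T4 by blast


end
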